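(* Let $\alpha_1,\alpha_2\in\mathbb{C}\setminus\mathbb{R}$ and suppose $\operatorname{Im}\alpha_1/\operatorname{Im}\alpha_2$ is an irrational non-Liouville number. Then $\mathcal{N}_2=\emptyset$, i.e. $D_t+\alpha_1D_x+\alpha_2D_y-\lambda$ is globally hypoelliptic on $\mathbb{T}^3$ for every $\lambda\in\mathbb{R}$.
   Context: $\mathbb{T}^n=\mathbb{R}^n/2\pi\mathbb{Z}^n$; $D_t=-i\partial_t$ etc. A linear differential operator $P$ on $\mathbb{T}^n$ is globally hypoelliptic (GH) if $u\in\mathcal{D}'(\mathbb{T}^n)$ and $Pu\in\mathcal{C}^\infty(\mathbb{T}^n)$ imply $u\in\mathcal{C}^\infty(\mathbb{T}^n)$. $\mathcal{N}_2=\{\lambda\in\mathbb{R}: D_t+\alpha_1D_x+\alpha_2D_y-\lambda\text{ is not GH on }\mathbb{T}^3_{(t,x,y)}\}$. A real number $\rho$ is Liouville if it is irrational and for every $M>0$ there are infinitely many $(p,q)\in\mathbb{Z}\times\mathbb{N}$ with $|\rho-p/q|<q^{-M}$. *)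

theory Defs
  imports "HOL-Analysis.Analysis" "HOL-Library.Numeral_Type"
begin

text \<open>Points of the torus T^n = R^n / 2 pi Z^n are represented by points of R^n
  (type real^'n); functions on the torus are 2 pi-periodic functions in each coordinate.\<close>

definition torus_periodic :: "(real^'n \<Rightarrow> complex) \<Rightarrow> bool" where
  "torus_periodic f \<longleftrightarrow> (\<forall>j x. f (x + (2*pi) *\<^sub>R axis j 1) = f x)"

definition pd :: "'n::finite \<Rightarrow> (real^'n \<Rightarrow> complex) \<Rightarrow> real^'n \<Rightarrow> complex" where
  "pd j f x = vector_derivative (\<lambda>s. f (x + s *\<^sub>R axis j 1)) (at 0)"

definition dpar :: "'n::finite list \<Rightarrow> (real^'n \<Rightarrow> complex) \<Rightarrow> real^'n \<Rightarrow> complex" where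
  "dpar js f = foldr pd js f"

definition smooth_fun :: "(real^'n::finite \<Rightarrow> complex) \<Rightarrow> bool" where
  "smooth_fun f \<longleftrightarrow>
     (\<forall>js j x. (\<lambda>s. dpar js f (x + s *\<^sub>R axis j 1)) differentiable (at 0)) \<and>
     (\<forall>js. continuous_on UNIV (dpar js f))"

definition torus_smooth :: "(real^'n::finite \<Rightarrow> complex) \<Rightarrow> bool" where
  "torus_smooth f \<longleftrightarrow> torus_periodic f \<and> smooth_fun f"

text \<open>D'(T^n): continuous linear functionals on C^infinity(T^n); continuity is
  expressed by the standard seminorm estimate.\<close>
definition torus_distribution :: "((real^'n::finite \<Rightarrow> complex) \<Rightarrow> complex) \<Rightarrow> bool" where
  "torus_distribution u \<longleftrightarrow>
     (\<forall>a b \<phi> \<psi>. torus_smooth \<phi> \<longrightarrow> torus_smooth \<psi> \<longrightarrow>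
        u (\<lambda>x. a * \<phi> x + b * \<psi> x) = a * u \<phi> + b * u \<psi>) \<and>
     (\<exists>C N. \<forall>\<phi>. torus_smooth \<phi> \<longrightarrow>
        norm (u \<phi>) \<le> C * (\<Sum>js\<in>{js::'n list. length js \<le> N}. SUP x. norm (dpar js \<phi> x)))"

definition dist_of :: "(real^'n::finite \<Rightarrow> complex) \<Rightarrow> (real^'n \<Rightarrow> complex) \<Rightarrow> complex" where
  "dist_of f \<phi> = integral (cbox 0 (\<chi> i. 2*pi)) (\<lambda>x. f x * \<phi> x)"

definition smooth_dist :: "((real^'n::finite \<Rightarrow> complex) \<Rightarrow> complex) \<Rightarrow> bool" where
  "smooth_dist u \<longleftrightarrow> (\<exists>f. torus_smooth f \<and> (\<forall>\<phi>. torus_smooth \<phi> \<longrightarrow> u \<phi> = dist_of f \<phi>))"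

definition Dop :: "'n::finite \<Rightarrow> (real^'n \<Rightarrow> complex) \<Rightarrow> real^'n \<Rightarrow> complex" where
  "Dop j f x = - \<i> * pd j f x"

definition cc_op :: "('n::finite \<Rightarrow> complex) \<Rightarrow> complex \<Rightarrow> (real^'n \<Rightarrow> complex) \<Rightarrow> real^'n \<Rightarrow> complex" where
  "cc_op c c0 f x = (\<Sum>j\<in>UNIV. c j * Dop j f x) + c0 * f x"

text \<open>Action on distributions via the formal transpose: (P u)(phi) = u(P^t phi),
  where P^t = sum_j (- c_j) D_j + c0.\<close>
definition cc_op_dist :: "('n::finite \<Rightarrow> complex) \<Rightarrow> complex \<Rightarrow>
    ((real^'n \<Rightarrow> complex) \<Rightarrow> complex) \<Rightarrow> (real^'n \<Rightarrow> complex) \<Rightarrow> complex" where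
  "cc_op_dist c c0 u \<phi> = u (cc_op (\<lambda>j. - c j) c0 \<phi>)"

definition globally_hypoelliptic :: "('n::finite \<Rightarrow> complex) \<Rightarrow> complex \<Rightarrow> bool" where
  "globally_hypoelliptic c c0 \<longleftrightarrow>
     (\<forall>u. torus_distribution u \<longrightarrow> smooth_dist (cc_op_dist c c0 u) \<longrightarrow> smooth_dist u)"

text \<open>Coordinates (t,x,y) of T^3 are indices 0,1,2 of type 3.
  Coefficients of D_t + alpha1 D_x + alpha2 D_y.\<close>
definition coeffs2 :: "complex \<Rightarrow> complex \<Rightarrow> 3 \<Rightarrow> complex" where
  "coeffs2 \<alpha>1 \<alpha>2 j = (if j = 0 then 1 else if j = 1 then \<alpha>1 else \<alpha>2)"

definition N2 :: "complex \<Rightarrow> complex \<Rightarrow> real set" where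
  "N2 \<alpha>1 \<alpha>2 = {l::real. \<not> globally_hypoelliptic (coeffs2 \<alpha>1 \<alpha>2) (- complex_of_real l)}"

definition liouville :: "real \<Rightarrow> bool" where
  "liouville \<rho> \<longleftrightarrow> \<rho> \<notin> \<rat> \<and>
     (\<forall>M>0. infinite {(p, q) | (p::int) (q::nat). q > 0 \<and> \<bar>\<rho> - of_int p / of_nat q\<bar> < real q powr (- M)})"

end

theory Submission
  imports Defs
begin


definition ee :: "('n::finite \<Rightarrow> int) \<Rightarrow> real^'n \<Rightarrow> complex" where
  "ee k x = exp (\<i> * of_real (\<Sum>i\<in>UNIV. of_int (k i) * x$i))"

definition mlt :: "'n list \<Rightarrow> ('n \<Rightarrow> int) \<Rightarrow> complex" where
  "mlt js k = (\<Prod>j\<leftarrow>js. \<i> * of_int (k j))"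

definition nk :: "('n::finite \<Rightarrow> int) \<Rightarrow> real" where
  "nk k = (\<Sum>i\<in>UNIV. \<bar>real_of_int (k i)\<bar>)"

lemma nk_nonneg: "nk k \<ge> 0"
  unfolding nk_def by (simp add: sum_nonneg)

lemma mlt_Cons: "mlt (j#js) k = \<i> * of_int (k j) * mlt js k"
  by (simp add: mlt_def)

lemma norm_mlt_le: "norm (mlt js k) \<le> (1 + nk k) ^ length js"
proof (induction js)
  case Nil then show ?case by (simp add: mlt_def)
next
  case (Cons j js)
  have a: "\<bar>real_of_int (k j)\<bar> \<le> nk k" unfolding nk_def
    by (rule member_le_sum) auto
  have "norm (mlt (j#js) k) = \<bar>real_of_int (k j)\<bar> * norm (mlt js k)"
    by (simp add: mlt_Cons norm_mult)
  also have "\<dots> \<le> (1 + nk k) * (1 + nk k) ^ length js"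
    using Cons a nk_nonneg[of k] by (intro mult_mono) auto
  finally show ?case by simp
qed

lemma dpar_Cons: "dpar (j#js) f = pd j (dpar js f)"
  by (simp add: dpar_def)

lemma dpar_Nil: "dpar [] f = f"
  by (simp add: dpar_def)

lemma dpar_append: "dpar (js @ ks) f = dpar js (dpar ks f)"
  by (simp add: dpar_def)

lemma sum_axis_line:
  fixes x :: "real^'n::finite"
  shows "(\<Sum>i\<in>UNIV. of_int (k i) * (x + s *\<^sub>R axis j 1)$i) =
         (\<Sum>i\<in>UNIV. of_int (k i) * x$i) + of_int (k j) * s"
proof -
  have "(\<Sum>i\<in>UNIV. of_int (k i) * (x + s *\<^sub>R axis j 1)$i) =
        (\<Sum>i\<in>UNIV. of_int (k i) * x$i + (if i = j then of_int (k j) * s else 0))"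
    by (rule sum.cong) (auto simp: axis_def algebra_simps)
  also have "\<dots> = (\<Sum>i\<in>UNIV. of_int (k i) * x$i) + of_int (k j) * s"
    by (simp add: sum.distrib)
  finally show ?thesis .
qed

lemma ee_line: "ee k (x + s *\<^sub>R axis j 1) = ee k x * exp (\<i> * of_real (of_int (k j) * s))"
  unfolding ee_def sum_axis_line by (simp add: algebra_simps exp_add)

lemma ee_periodic: "ee k (x + (2*pi) *\<^sub>R axis j 1) = ee k x"
proof -
  have "exp (\<i> * complex_of_real (real_of_int (k j) * (2 * pi))) = 1"
    using exp_2pi_1_int[of "k j"] by (simp add: algebra_simps)
  then show ?thesis by (simp add: ee_line)
qed

lemma exp_line_deriv:
  "((\<lambda>s::real. exp (\<i> * of_real (c * s))) has_vector_derivative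
     (\<i> * of_real c * exp (\<i> * of_real (c * s0)))) (at s0)"
proof -
  have "((\<lambda>z. exp (\<i> * of_real c * z)) has_field_derivative
          (exp (\<i> * of_real c * of_real s0) * (\<i> * of_real c))) (at (of_real s0))"
    by (auto intro!: derivative_eq_intros)
  from has_vector_derivative_real_field[OF this]
  show ?thesis by (simp add: algebra_simps)
qed

lemma ee_line_deriv:
  "((\<lambda>s. c * ee k (x + s *\<^sub>R axis j 1)) has_vector_derivative
     (c * (\<i> * of_int (k j)) * ee k (x + s0 *\<^sub>R axis j 1))) (at s0)"
proof -
  have "((\<lambda>s. (c * ee k x) * exp (\<i> * of_real (of_int (k j) * s))) has_vector_derivative
     ((c * ee k x) * (\<i> * of_real (of_int (k j)) * exp (\<i> * of_real (of_int (k j) * s0))))) (at s0)"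
    by (intro has_vector_derivative_mult_right exp_line_deriv)
  then show ?thesis by (simp add: ee_line algebra_simps)
qed

lemma pd_ee_mult: "pd j (\<lambda>x. c * ee k x) x = c * (\<i> * of_int (k j)) * ee k x"
  unfolding pd_def using vector_derivative_at[OF ee_line_deriv[of c k x j 0]] by simp

lemma dpar_ee: "dpar js (ee k) = (\<lambda>x. mlt js k * ee k x)"
proof (induction js)
  case Nil then show ?case by (simp add: dpar_Nil mlt_def)
next
  case (Cons j js)
  show ?case
  proof (rule ext)
    fix x
    have "dpar (j#js) (ee k) x = pd j (\<lambda>x. mlt js k * ee k x) x"
      by (simp only: dpar_Cons Cons)
    also have "\<dots> = mlt js k * (\<i> * of_int (k j)) * ee k x" by (rule pd_ee_mult)
    finally show "dpar (j#js) (ee k) x = mlt (j#js) k * ee k x" by (simp add: mlt_Cons)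
  qed
qed

lemma continuous_ee [continuous_intros]: "continuous_on A (ee k)"
  unfolding ee_def by (intro continuous_intros)

lemma torus_smooth_ee: "torus_smooth (ee k)"
  unfolding torus_smooth_def smooth_fun_def torus_periodic_def
proof (intro conjI allI)
  fix js j x
  show "(\<lambda>s. dpar js (ee k) (x + s *\<^sub>R axis j 1)) differentiable at 0"
    unfolding dpar_ee using ee_line_deriv[of "mlt js k" k x j 0] by (rule differentiableI_vector)
next
  fix js
  show "continuous_on UNIV (dpar js (ee k))"
    unfolding dpar_ee by (intro continuous_intros)
qed (simp add: ee_periodic)


definition ser :: "(nat \<Rightarrow> complex) \<Rightarrow> (nat \<Rightarrow> ('n::finite \<Rightarrow> int)) \<Rightarrow> real^'n \<Rightarrow> complex" where
  "ser a k x = (\<Sum>n. a n * ee (k n) x)"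

definition rapid :: "(nat \<Rightarrow> complex) \<Rightarrow> (nat \<Rightarrow> ('n::finite \<Rightarrow> int)) \<Rightarrow> bool" where
  "rapid a k \<longleftrightarrow> (\<forall>m. summable (\<lambda>n. norm (a n) * (1 + nk (k n)) ^ m))"

lemma norm_ee [simp]: "norm (ee k x) = 1"
  unfolding ee_def by (rule norm_exp_i_times)

lemma rapid_summable: "rapid a k \<Longrightarrow> summable (\<lambda>n. norm (a n))"
  unfolding rapid_def by (drule spec[of _ 0]) simp

lemma rapid_summable1: "rapid a k \<Longrightarrow> summable (\<lambda>n. norm (a n) * (1 + nk (k n)))"
  unfolding rapid_def by (drule spec[of _ 1]) simp

lemma rapid_mono:
  assumes "rapid a k" "\<And>n. norm (b n) \<le> norm (a n)"
  shows "rapid b k"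
  unfolding rapid_def
proof
  fix m
  show "summable (\<lambda>n. norm (b n) * (1 + nk (k n)) ^ m)"
    using assms(1) unfolding rapid_def
    by (rule_tac summable_comparison_test[of _ "\<lambda>n. norm (a n) * (1 + nk (k n)) ^ m"])
       (auto intro!: exI[of _ 0] mult_right_mono assms(2) simp: nk_nonneg add_nonneg_nonneg)
qed

lemma rapid_mult_mlt:
  assumes "rapid a k"
  shows "rapid (\<lambda>n. a n * mlt js (k n)) k"
  unfolding rapid_def
proof
  fix m
  have s: "summable (\<lambda>n. norm (a n) * (1 + nk (k n)) ^ (m + length js))"
    using assms unfolding rapid_def by blast
  show "summable (\<lambda>n. norm (a n * mlt js (k n)) * (1 + nk (k n)) ^ m)"
  proof (rule summable_comparison_test[OF _ s], intro exI[of _ 0] allI impI)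
    fix n
    have p: "0 \<le> 1 + nk (k n)" using nk_nonneg[of "k n"] by linarith
    have "norm (norm (a n * mlt js (k n)) * (1 + nk (k n)) ^ m)
        = norm (a n) * norm (mlt js (k n)) * (1 + nk (k n)) ^ m"
      using p by (simp add: norm_mult)
    also have "\<dots> \<le> norm (a n) * (1 + nk (k n)) ^ length js * (1 + nk (k n)) ^ m"
      using p norm_mlt_le[of js "k n"] by (intro mult_right_mono mult_left_mono) auto
    also have "\<dots> = norm (a n) * (1 + nk (k n)) ^ (m + length js)"
      by (simp add: power_add algebra_simps)
    finally show "norm (norm (a n * mlt js (k n)) * (1 + nk (k n)) ^ m)
        \<le> norm (a n) * (1 + nk (k n)) ^ (m + length js)" .
  qed
qed

lemma rapid_mult_kj:
  assumes "rapid a k"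
  shows "rapid (\<lambda>n. a n * (\<i> * of_int (k n j))) k"
  using rapid_mult_mlt[OF assms, of "[j]"] by (simp add: mlt_def)

lemma ser_summable:
  assumes "summable (\<lambda>n. norm (a n))"
  shows "summable (\<lambda>n. a n * ee (k n) x)"
  by (rule summable_norm_cancel) (simp add: norm_mult assms)

lemma ser_norm_le:
  assumes "summable (\<lambda>n. norm (a n))"
  shows "norm (ser a k x) \<le> (\<Sum>n. norm (a n))"
proof -
  have "norm (ser a k x) \<le> (\<Sum>n. norm (a n * ee (k n) x))"
    unfolding ser_def by (rule summable_norm) (simp add: norm_mult assms)
  then show ?thesis by (simp add: norm_mult)
qed

lemma ser_uniform:
  assumes "summable (\<lambda>n. norm (a n))"
  shows "uniform_limit A (\<lambda>N x. \<Sum>n<N. a n * ee (k n) x) (ser a k) sequentially"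
proof -
  have "uniform_limit A (\<lambda>N x. \<Sum>n<N. a n * ee (k n) x) (\<lambda>x. \<Sum>n. a n * ee (k n) x) sequentially"
    by (rule Weierstrass_m_test[OF _ assms]) (simp add: norm_mult)
  then show ?thesis unfolding ser_def[abs_def] .
qed

lemma ser_continuous:
  assumes "summable (\<lambda>n. norm (a n))"
  shows "continuous_on A (ser a k)"
  by (rule uniform_limit_theorem[OF _ ser_uniform[OF assms]])
     (auto intro!: always_eventually continuous_intros)

lemma ser_periodic: "ser a k (x + (2*pi) *\<^sub>R axis j 1) = ser a k x"
  unfolding ser_def by (simp add: ee_periodic)

lemma ser_line_deriv:
  assumes r: "rapid b k"
  shows "((\<lambda>s. ser b k (x + s *\<^sub>R axis j 1)) has_vector_derivative
           ser (\<lambda>n. b n * (\<i> * of_int (k n j))) k (x + s0 *\<^sub>R axis j 1)) (at s0)"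
proof -
  define f where "f n s = b n * ee (k n) (x + s *\<^sub>R axis j 1)" for n s
  define d where "d n s = b n * (\<i> * of_int (k n j)) * ee (k n) (x + s *\<^sub>R axis j 1)" for n s
  define D where "D s = ser (\<lambda>n. b n * (\<i> * of_int (k n j))) k (x + s *\<^sub>R axis j 1)" for s
  have sb: "summable (\<lambda>n. norm (b n))" using rapid_summable[OF r] .
  have sd: "summable (\<lambda>n. norm (b n * (\<i> * of_int (k n j))))"
    using rapid_summable[OF rapid_mult_kj[OF r]] .
  have ul: "uniform_limit UNIV (\<lambda>N s. \<Sum>n<N. d n s) D sequentially"
  proof -
    have "uniform_limit UNIV (\<lambda>N y. \<Sum>n<N. b n * (\<i> * of_int (k n j)) * ee (k n) y)
           (ser (\<lambda>n. b n * (\<i> * of_int (k n j))) k) sequentially"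
      by (rule ser_uniform[OF sd])
    then have "uniform_limit ((\<lambda>s. x + s *\<^sub>R axis j 1) ` UNIV) (\<lambda>N y. \<Sum>n<N. b n * (\<i> * of_int (k n j)) * ee (k n) y)
           (ser (\<lambda>n. b n * (\<i> * of_int (k n j))) k) sequentially"
      by (rule uniform_limit_on_subset) auto
    then show ?thesis unfolding d_def[abs_def] D_def[abs_def] uniform_limit_iff by auto
  qed
  have "\<exists>g. \<forall>s\<in>UNIV. (\<lambda>n. f n s) sums (g s) \<and>
          (g has_derivative (\<lambda>h. h *\<^sub>R D s)) (at s within UNIV)"
  proof (rule has_derivative_series[where f' = "\<lambda>n s h. h *\<^sub>R d n s"])
    fix n s
    show "(f n has_derivative (\<lambda>h. h *\<^sub>R d n s)) (at s within UNIV)"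
      using ee_line_deriv[of "b n" "k n" x j s] unfolding f_def d_def has_vector_derivative_def
      by simp
  next
    fix e :: real assume e: "e > 0"
    from ul e have ev: "\<forall>\<^sub>F N in sequentially. \<forall>s\<in>UNIV. dist (\<Sum>n<N. d n s) (D s) < e"
      unfolding uniform_limit_iff by blast
    show "\<forall>\<^sub>F N in sequentially. \<forall>s\<in>UNIV. \<forall>h. norm ((\<Sum>n<N. h *\<^sub>R d n s) - h *\<^sub>R D s) \<le> e * norm h"
      using ev
    proof eventually_elim
      case (elim N)
      show ?case
      proof (intro ballI allI)
        fix s h
        have "norm ((\<Sum>n<N. h *\<^sub>R d n s) - h *\<^sub>R D s) = \<bar>h\<bar> * norm ((\<Sum>n<N. d n s) - D s)"
          by (simp add: scaleR_sum_right[symmetric] scaleR_diff_right[symmetric])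
        also have "\<dots> \<le> \<bar>h\<bar> * e"
          using elim by (intro mult_left_mono) (auto simp: dist_norm less_imp_le)
        finally show "norm ((\<Sum>n<N. h *\<^sub>R d n s) - h *\<^sub>R D s) \<le> e * norm h"
          by (simp add: mult.commute)
      qed
    qed
  next
    show "(\<lambda>n. f n 0) sums ser b k (x + 0 *\<^sub>R axis j 1)"
      unfolding f_def ser_def using ser_summable[OF sb, of k x] by (simp add: summable_sums)
  qed auto
  then obtain g where g: "\<And>s. (\<lambda>n. f n s) sums (g s)" "\<And>s. (g has_derivative (\<lambda>h. h *\<^sub>R D s)) (at s)"
    by auto
  have "g = (\<lambda>s. ser b k (x + s *\<^sub>R axis j 1))"
  proof
    fix s
    show "g s = ser b k (x + s *\<^sub>R axis j 1)"
      using g(1)[of s] unfolding f_def ser_def by (simp add: sums_iff)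
  qed
  with g(2)[of s0] show ?thesis unfolding has_vector_derivative_def D_def by simp
qed

lemma pd_ser:
  assumes "rapid b k"
  shows "pd j (ser b k) x = ser (\<lambda>n. b n * (\<i> * of_int (k n j))) k x"
  unfolding pd_def using vector_derivative_at[OF ser_line_deriv[OF assms, of x j 0]] by simp

lemma dpar_ser:
  assumes "rapid a k"
  shows "dpar js (ser a k) = ser (\<lambda>n. a n * mlt js (k n)) k"
proof (induction js)
  case Nil then show ?case by (simp add: dpar_Nil mlt_def)
next
  case (Cons j js)
  show ?case
  proof
    fix x
    have "dpar (j#js) (ser a k) x = pd j (ser (\<lambda>n. a n * mlt js (k n)) k) x"
      by (simp add: dpar_Cons Cons)
    also have "\<dots> = ser (\<lambda>n. a n * mlt js (k n) * (\<i> * of_int (k n j))) k x"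
      by (rule pd_ser[OF rapid_mult_mlt[OF assms]])
    also have "\<dots> = ser (\<lambda>n. a n * mlt (j#js) (k n)) k x"
      by (simp add: mlt_Cons algebra_simps)
    finally show "dpar (j#js) (ser a k) x = ser (\<lambda>n. a n * mlt (j#js) (k n)) k x" .
  qed
qed

lemma torus_smooth_ser:
  assumes "rapid a k"
  shows "torus_smooth (ser a k)"
  unfolding torus_smooth_def smooth_fun_def torus_periodic_def
proof (intro conjI allI)
  fix js j x
  show "(\<lambda>s. dpar js (ser a k) (x + s *\<^sub>R axis j 1)) differentiable at 0"
    unfolding dpar_ser[OF assms]
    by (rule differentiableI_vector[OF ser_line_deriv[OF rapid_mult_mlt[OF assms]]])
next
  fix js
  show "continuous_on UNIV (dpar js (ser a k))"
    unfolding dpar_ser[OF assms]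
    by (rule ser_continuous[OF rapid_summable[OF rapid_mult_mlt[OF assms]]])
qed (simp add: ser_periodic)

lemma dpar_ser_bound:
  assumes "rapid a k"
  shows "norm (dpar js (ser a k) x) \<le> (\<Sum>n. norm (a n) * (1 + nk (k n)) ^ length js)"
proof -
  have s1: "summable (\<lambda>n. norm (a n * mlt js (k n)))"
    by (rule rapid_summable[OF rapid_mult_mlt[OF assms]])
  have s2: "summable (\<lambda>n. norm (a n) * (1 + nk (k n)) ^ length js)"
    using assms unfolding rapid_def by blast
  have "norm (dpar js (ser a k) x) \<le> (\<Sum>n. norm (a n * mlt js (k n)))"
    unfolding dpar_ser[OF assms] by (rule ser_norm_le[OF s1])
  also have "\<dots> \<le> (\<Sum>n. norm (a n) * (1 + nk (k n)) ^ length js)"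
    by (rule suminf_le[OF _ s1 s2]) (simp add: norm_mult mult_left_mono norm_mlt_le)
  finally show ?thesis .
qed

lemma ser_finite:
  "ser (\<lambda>n. if n < N then a n else 0) k x = (\<Sum>n<N. a n * ee (k n) x)"
  unfolding ser_def by (subst suminf_finite[of "{..<N}"]) auto

lemma rapid_trunc: "rapid a k \<Longrightarrow> rapid (\<lambda>n. if n < N then a n else 0) k"
  by (erule rapid_mono) auto

lemma rapid_tail: "rapid a k \<Longrightarrow> rapid (\<lambda>n. if n < N then 0 else a n) k"
  by (erule rapid_mono) auto


definition tb :: "real^'n::finite" where "tb = (\<chi> i. 2*pi)"

abbreviation TT :: "(real^'n::finite) set" where "TT \<equiv> cbox 0 tb"

lemma tb_nth [simp]: "tb $ i = 2*pi"
  by (simp add: tb_def)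

lemma integral_translate_cbox:
  fixes h :: "real^'n::finite \<Rightarrow> complex"
  assumes "continuous_on UNIV h"
  shows "integral (cbox a b) (\<lambda>x. h (x + c)) = integral (cbox (a + c) (b + c)) h"
proof -
  have "(h has_integral integral (cbox (a + c) (b + c)) h) (cbox (a + c) (b + c))"
    using integrable_continuous[OF continuous_on_subset[OF assms]] by (auto intro: integrable_integral)
  from has_integral_affinity'[OF this, of 1 c]
  have "((\<lambda>x. h (x + c)) has_integral integral (cbox (a + c) (b + c)) h) (cbox a b)"
    by (simp add: add.commute)
  then show ?thesis by (rule integral_unique)
qed

lemma axis_nth: "axis j (1::real) $ i = (if i = j then 1 else 0)"
  by (simp add: axis_def)

lemma translation_invariance:
  fixes h :: "real^'n::finite \<Rightarrow> complex"
  assumes cont: "continuous_on UNIV h"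
    and per: "\<And>x. h (x + (2*pi) *\<^sub>R axis j 1) = h x"
    and s: "0 \<le> s" "s \<le> 2*pi"
  shows "integral TT (\<lambda>x. h (x + s *\<^sub>R axis j 1)) = integral TT h"
proof -
  define e :: "real^'n" where "e = axis j 1"
  have eB: "e \<in> Basis" by (simp add: e_def)
  have inn: "x \<bullet> e = x $ j" for x :: "real^'n" by (simp add: e_def inner_axis)
  have int: "h integrable_on cbox a b" for a b
    by (rule integrable_continuous[OF continuous_on_subset[OF cont]]) auto
  have 1: "integral TT (\<lambda>x. h (x + s *\<^sub>R e)) = integral (cbox (s *\<^sub>R e) (tb + s *\<^sub>R e)) h"
    using integral_translate_cbox[OF cont, of 0 tb "s *\<^sub>R e"] by simp
  have 2: "integral (cbox (s *\<^sub>R e) (tb + s *\<^sub>R e)) h =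
      integral (cbox (s *\<^sub>R e) (tb + s *\<^sub>R e) \<inter> {x. x \<bullet> e \<le> 2*pi}) h +
      integral (cbox (s *\<^sub>R e) (tb + s *\<^sub>R e) \<inter> {x. x \<bullet> e \<ge> 2*pi}) h"
    by (rule integral_split[OF int eB])
  have 3: "integral TT h = integral (TT \<inter> {x. x \<bullet> e \<le> s}) h + integral (TT \<inter> {x. x \<bullet> e \<ge> s}) h"
    by (rule integral_split[OF int eB])
  have 4: "cbox (s *\<^sub>R e) (tb + s *\<^sub>R e) \<inter> {x. x \<bullet> e \<le> 2*pi} = TT \<inter> {x. x \<bullet> e \<ge> s}"
    unfolding inn using s by (auto simp: mem_box_cart e_def axis_nth split: if_splits) (smt (verit))+
  define lo :: "real^'n" where "lo = (\<chi> i. if i = j then 2*pi else 0)"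
  define hi :: "real^'n" where "hi = (\<chi> i. if i = j then 2*pi + s else 2*pi)"
  define hi' :: "real^'n" where "hi' = (\<chi> i. if i = j then s else 2*pi)"
  have 5: "cbox (s *\<^sub>R e) (tb + s *\<^sub>R e) \<inter> {x. x \<bullet> e \<ge> 2*pi} = cbox lo hi"
    unfolding inn using s
    by (auto simp: mem_box_cart e_def axis_nth lo_def hi_def split: if_splits) (smt (verit))+
  have 6: "TT \<inter> {x. x \<bullet> e \<le> s} = cbox 0 hi'"
    unfolding inn using s
    by (auto simp: mem_box_cart e_def axis_nth hi'_def split: if_splits) (smt (verit))+
  have 7: "integral (cbox 0 hi') h = integral (cbox 0 hi') (\<lambda>x. h (x + (2*pi) *\<^sub>R e))"
    using per by (simp add: e_def)
  also have "\<dots> = integral (cbox (0 + (2*pi) *\<^sub>R e) (hi' + (2*pi) *\<^sub>R e)) h"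
    by (rule integral_translate_cbox[OF cont])
  also have "cbox (0 + (2*pi) *\<^sub>R e) (hi' + (2*pi) *\<^sub>R e) = cbox lo hi"
  proof -
    have "0 + (2*pi) *\<^sub>R e = lo" by (auto simp: vec_eq_iff lo_def e_def axis_nth)
    moreover have "hi' + (2*pi) *\<^sub>R e = hi" by (auto simp: vec_eq_iff hi_def hi'_def e_def axis_nth)
    ultimately show ?thesis by simp
  qed
  finally have 8: "integral (cbox 0 hi') h = integral (cbox lo hi) h" .
  show ?thesis
    unfolding e_def[symmetric] 1 2 3 4 5 6 8 by simp
qed

lemma line_deriv_at:
  assumes "\<And>y. (\<lambda>s. h (y + s *\<^sub>R axis j 1)) differentiable (at 0)"
  shows "((\<lambda>s. h (x + s *\<^sub>R axis j 1)) has_vector_derivative pd j h (x + t *\<^sub>R axis j 1)) (at t)"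
proof -
  define y where "y = x + t *\<^sub>R axis j 1"
  have g: "((\<lambda>s. h (y + s *\<^sub>R axis j 1)) has_vector_derivative pd j h y) (at ((\<lambda>s. s - t) t))"
    using assms[of y] unfolding pd_def by (simp add: vector_derivative_works[symmetric])
  have f: "((\<lambda>s::real. s - t) has_vector_derivative 1) (at t)"
    by (auto intro!: derivative_eq_intros)
  have "(((\<lambda>s. h (y + s *\<^sub>R axis j 1)) \<circ> (\<lambda>s. s - t)) has_vector_derivative (1 *\<^sub>R pd j h y)) (at t)"
    by (rule vector_diff_chain_at[OF f g])
  moreover have "((\<lambda>s. h (y + s *\<^sub>R axis j 1)) \<circ> (\<lambda>s. s - t)) = (\<lambda>s. h (x + s *\<^sub>R axis j 1))"
    by (rule ext) (simp add: y_def algebra_simps scaleR_diff_left)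
  ultimately show ?thesis by (simp add: y_def)
qed

lemma integral_pd_zero:
  fixes h :: "real^'n::finite \<Rightarrow> complex"
  assumes cont: "continuous_on UNIV h"
    and per: "\<And>x. h (x + (2*pi) *\<^sub>R axis j 1) = h x"
    and dif: "\<And>y. (\<lambda>s. h (y + s *\<^sub>R axis j 1)) differentiable (at 0)"
    and contD: "continuous_on UNIV (pd j h)"
  shows "integral TT (pd j h) = 0"
proof -
  define e :: "real^'n" where "e = axis j 1"
  define D where "D = pd j h"
  have intD: "D integrable_on TT"
    unfolding D_def by (rule integrable_continuous[OF continuous_on_subset[OF contD]]) auto
  have inth: "(\<lambda>x. h (x + c)) integrable_on TT" for c
    by (rule integrable_continuous, rule continuous_on_subset[where s=UNIV])
       (auto intro!: continuous_on_compose2[OF cont] continuous_intros)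
  define K :: "(real^'n) set" where "K = cbox 0 (tb + e)"
  have uc: "uniformly_continuous_on K D"
    unfolding K_def D_def by (rule compact_uniformly_continuous[OF continuous_on_subset[OF contD]]) auto
  have TK: "x + t *\<^sub>R e \<in> K" if "x \<in> TT" "0 \<le> t" "t \<le> 1" for x t
    using that pi_gt3 by (auto simp: K_def mem_box_cart e_def axis_nth) (smt (verit))
  have "norm (integral TT D) \<le> \<epsilon> * measure lborel (TT::(real^'n) set)" if eps: "\<epsilon> > 0" for \<epsilon>
  proof -
    obtain d where d: "d > 0" "\<And>x x'. x \<in> K \<Longrightarrow> x' \<in> K \<Longrightarrow> dist x' x < d \<Longrightarrow> dist (D x') (D x) < \<epsilon>"
      using uc eps unfolding uniformly_continuous_on_def by metis
    define s where "s = min (d/2) 1"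
    have s: "0 < s" "s < d" "s \<le> 1" "s \<le> 2*pi" using d pi_gt3 by (auto simp: s_def)
    have est: "norm ((h (x + s *\<^sub>R e) - h x) / s - D x) \<le> \<epsilon>" if x: "x \<in> TT" for x
    proof -
      define \<phi> where "\<phi> t = h (x + t *\<^sub>R e) - of_real t * D x" for t :: real
      have der: "(\<phi> has_derivative (\<lambda>u. u *\<^sub>R (D (x + t *\<^sub>R e) - D x))) (at t within {0..s})" for t
      proof -
        have ld: "((\<lambda>s. h (x + s *\<^sub>R e)) has_vector_derivative D (x + t *\<^sub>R e)) (at t)"
          unfolding D_def e_def by (rule line_deriv_at[OF dif])
        have lin: "((\<lambda>t. of_real t * D x) has_vector_derivative D x) (at t)"
        proof -
          have "((\<lambda>z. z * D x) has_field_derivative D x) (at (of_real t))"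
            by (auto intro!: derivative_eq_intros)
          from has_vector_derivative_real_field[OF this] show ?thesis .
        qed
        have "(\<phi> has_vector_derivative (D (x + t *\<^sub>R e) - D x)) (at t)"
          unfolding \<phi>_def by (rule has_vector_derivative_diff[OF ld lin])
        then show ?thesis
          unfolding has_vector_derivative_def by (auto intro: has_derivative_at_withinI)
      qed
      have bnd: "onorm (\<lambda>u. u *\<^sub>R (D (x + t *\<^sub>R e) - D x)) \<le> \<epsilon>" if t: "t \<in> {0..s}" for t
      proof -
        have "onorm (\<lambda>u::real. u *\<^sub>R (D (x + t *\<^sub>R e) - D x)) = onorm (\<lambda>u::real. u) * norm (D (x + t *\<^sub>R e) - D x)"
          by (rule onorm_scaleR_left) simp
        also have "\<dots> = norm (D (x + t *\<^sub>R e) - D x)" by (simp add: onorm_id)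
        also have "\<dots> \<le> \<epsilon>"
        proof -
          have "dist (x + t *\<^sub>R e) x < d" using t s by (simp add: dist_norm e_def)
          then have "dist (D (x + t *\<^sub>R e)) (D x) < \<epsilon>"
            using d(2)[of x "x + t *\<^sub>R e"] TK[OF x, of t] TK[OF x, of 0] t s by auto
          then show ?thesis by (simp add: dist_norm)
        qed
        finally show ?thesis .
      qed
      have "norm (\<phi> s - \<phi> 0) \<le> \<epsilon> * norm (s - 0)"
        by (rule differentiable_bound[OF convex_real_interval(5) der bnd]) (use s in auto)
      then have "norm (h (x + s *\<^sub>R e) - h x - of_real s * D x) \<le> \<epsilon> * s"
        using s by (simp add: \<phi>_def algebra_simps)
      moreover have "(h (x + s *\<^sub>R e) - h x) / s - D x = (h (x + s *\<^sub>R e) - h x - of_real s * D x) / of_real s"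
        using s by (simp add: field_simps)
      ultimately show ?thesis using s by (simp add: norm_divide divide_le_eq mult.commute)
    qed
    have zero: "integral TT (\<lambda>x. (h (x + s *\<^sub>R e) - h x) / s) = 0"
    proof -
      have "integral TT (\<lambda>x. (h (x + s *\<^sub>R e) - h x) / s) =
            (integral TT (\<lambda>x. h (x + s *\<^sub>R e)) - integral TT h) / s"
        using inth[of "s *\<^sub>R e"] inth[of 0]
        by (simp add: integral_diff integral_divide)
      also have "\<dots> = 0"
        using translation_invariance[OF cont per, of s] s by (simp add: e_def)
      finally show ?thesis .
    qed
    have iq: "(\<lambda>x. (h (x + s *\<^sub>R e) - h x) / s) integrable_on TT"
      using inth[of "s *\<^sub>R e"] inth[of 0] by (auto intro!: integrable_diff integrable_on_divide)
    have "integral TT (\<lambda>x. (h (x + s *\<^sub>R e) - h x) / s - D x) =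
          integral TT (\<lambda>x. (h (x + s *\<^sub>R e) - h x) / s) - integral TT D"
      by (rule integral_diff[OF iq intD])
    then have "integral TT D = - integral TT (\<lambda>x. (h (x + s *\<^sub>R e) - h x) / s - D x)"
      using zero by simp
    then have "norm (integral TT D) = norm (integral TT (\<lambda>x. (h (x + s *\<^sub>R e) - h x) / s - D x))"
      by simp
    also have "\<dots> \<le> integral (TT::(real^'n) set) (\<lambda>x. \<epsilon>)"
      by (rule integral_norm_bound_integral[OF integrable_diff[OF iq intD] integrable_const est])
    also have "\<dots> = \<epsilon> * measure lborel (TT::(real^'n) set)" by simp
    finally show ?thesis .
  qed
  then have "norm (integral TT D) \<le> 0"
  proof -
    assume H: "\<And>\<epsilon>. \<epsilon> > 0 \<Longrightarrow> norm (integral TT D) \<le> \<epsilon> * measure lborel (TT::(real^'n) set)"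
    show ?thesis
    proof (rule field_le_epsilon)
      fix \<epsilon> :: real assume "\<epsilon> > 0"
      have c: "measure lborel (TT::(real^'n) set) > 0"
        by (simp add: content_pos_lt_eq mem_box_cart Basis_vec_def cart_eq_inner_axis[symmetric] inner_axis)
      have "norm (integral TT D) \<le> (\<epsilon> / measure lborel (TT::(real^'n) set)) * measure lborel (TT::(real^'n) set)"
        using H[OF divide_pos_pos[OF \<open>\<epsilon> > 0\<close> c]] by linarith
      then show "norm (integral TT D) \<le> 0 + \<epsilon>" using c by simp
    qed
  qed
  then show ?thesis by (simp add: D_def)
qed


definition cf :: "('n::finite \<Rightarrow> int) \<Rightarrow> (real^'n \<Rightarrow> complex) \<Rightarrow> complex" where
  "cf k \<psi> = integral TT (\<lambda>x. \<psi> x * ee k x)"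

lemma ts_cont: "torus_smooth \<psi> \<Longrightarrow> continuous_on A \<psi>"
  unfolding torus_smooth_def smooth_fun_def
  by (metis dpar_Nil continuous_on_subset subset_UNIV)

lemma ts_diff: "torus_smooth \<psi> \<Longrightarrow> (\<lambda>s. \<psi> (y + s *\<^sub>R axis j 1)) differentiable (at 0)"
  unfolding torus_smooth_def smooth_fun_def
  by (metis dpar_Nil)

lemma ts_per: "torus_smooth \<psi> \<Longrightarrow> \<psi> (x + (2*pi) *\<^sub>R axis j 1) = \<psi> x"
  unfolding torus_smooth_def torus_periodic_def by blast

lemma periodic_pd:
  assumes "torus_periodic f" shows "torus_periodic (pd j f)"
  unfolding torus_periodic_def
proof (intro allI)
  fix i x
  have "(\<lambda>s. f (x + (2*pi) *\<^sub>R axis i 1 + s *\<^sub>R axis j 1)) = (\<lambda>s. f (x + s *\<^sub>R axis j 1))"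
  proof
    fix s
    have "x + (2*pi) *\<^sub>R axis i 1 + s *\<^sub>R axis j 1 = (x + s *\<^sub>R axis j 1) + (2*pi) *\<^sub>R axis i 1"
      by (simp add: algebra_simps)
    then show "f (x + (2*pi) *\<^sub>R axis i 1 + s *\<^sub>R axis j 1) = f (x + s *\<^sub>R axis j 1)"
      using assms unfolding torus_periodic_def by metis
  qed
  then show "pd j f (x + (2*pi) *\<^sub>R axis i 1) = pd j f x" by (simp add: pd_def)
qed

lemma periodic_dpar: "torus_periodic f \<Longrightarrow> torus_periodic (dpar js f)"
  by (induction js) (auto simp: dpar_Nil dpar_Cons intro: periodic_pd)

lemma ts_dpar: assumes "torus_smooth \<psi>" shows "torus_smooth (dpar js \<psi>)"
  using assms unfolding torus_smooth_def smooth_fun_def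
  by (auto simp: dpar_append[symmetric] intro: periodic_dpar)

lemma ts_pd: assumes "torus_smooth \<psi>" shows "torus_smooth (pd j \<psi>)"
  using ts_dpar[OF assms, of "[j]"] by (simp add: dpar_Cons dpar_Nil)

lemma pd_mult:
  assumes "(\<lambda>s. f (x + s *\<^sub>R axis j 1)) differentiable (at 0)"
      and "(\<lambda>s. g (x + s *\<^sub>R axis j 1)) differentiable (at 0)"
  shows "((\<lambda>s. f (x + s *\<^sub>R axis j 1) * g (x + s *\<^sub>R axis j 1)) has_vector_derivative
           (f x * pd j g x + pd j f x * g x)) (at 0)"
proof -
  have a: "((\<lambda>s. f (x + s *\<^sub>R axis j 1)) has_vector_derivative pd j f x) (at 0)"
    using assms(1) unfolding pd_def by (simp add: vector_derivative_works[symmetric])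
  have b: "((\<lambda>s. g (x + s *\<^sub>R axis j 1)) has_vector_derivative pd j g x) (at 0)"
    using assms(2) unfolding pd_def by (simp add: vector_derivative_works[symmetric])
  show ?thesis using has_vector_derivative_mult[OF a b] by simp
qed

lemma ee_diff: "(\<lambda>s. ee k (y + s *\<^sub>R axis j 1)) differentiable (at 0)"
  using differentiableI_vector[OF ee_line_deriv[of 1 k y j 0]] by simp

lemma pd_ee: "pd j (ee k) x = \<i> * of_int (k j) * ee k x"
  using pd_ee_mult[of j 1 k x] by simp

lemma cf_pd:
  assumes ts: "torus_smooth \<psi>"
  shows "cf k (pd j \<psi>) = - (\<i> * of_int (k j)) * cf k \<psi>"
proof -
  define h where "h x = \<psi> x * ee k x" for x
  have pdh: "pd j h x = pd j \<psi> x * ee k x + \<psi> x * (\<i> * of_int (k j) * ee k x)" for x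
    using vector_derivative_at[OF pd_mult[OF ts_diff[OF ts] ee_diff, of x j k]]
    unfolding pd_def[of j h] h_def by (simp add: pd_ee algebra_simps)
  have contpd: "continuous_on UNIV (pd j \<psi>)" using ts_cont[OF ts_pd[OF ts]] .
  have "integral TT (pd j h) = 0"
  proof (rule integral_pd_zero)
    show "continuous_on UNIV h" unfolding h_def by (intro continuous_intros ts_cont[OF ts])
    show "h (x + (2 * pi) *\<^sub>R axis j 1) = h x" for x
      unfolding h_def by (simp add: ts_per[OF ts] ee_periodic)
    show "(\<lambda>s. h (y + s *\<^sub>R axis j 1)) differentiable at 0" for y
      unfolding h_def using differentiableI_vector[OF pd_mult[OF ts_diff[OF ts] ee_diff]] .
    show "continuous_on UNIV (pd j h)"
      unfolding pdh by (intro continuous_intros contpd ts_cont[OF ts])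
  qed
  moreover have "integral TT (pd j h) = cf k (pd j \<psi>) + (\<i> * of_int (k j)) * cf k \<psi>"
  proof -
    have i1: "(\<lambda>x. pd j \<psi> x * ee k x) integrable_on TT"
      by (rule integrable_continuous) (intro continuous_intros continuous_on_subset[OF contpd], auto)
    have i2: "(\<lambda>x. \<psi> x * ee k x) integrable_on TT"
      by (rule integrable_continuous) (intro continuous_intros ts_cont[OF ts])
    have "integral TT (pd j h) = integral TT (\<lambda>x. pd j \<psi> x * ee k x + (\<i> * of_int (k j)) * (\<psi> x * ee k x))"
      unfolding pdh by (simp add: algebra_simps)
    also have "\<dots> = cf k (pd j \<psi>) + (\<i> * of_int (k j)) * cf k \<psi>"
      unfolding cf_def by (simp add: integral_add[OF i1 integrable_on_mult_right[OF i2]])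
    finally show ?thesis .
  qed
  ultimately show ?thesis by (simp add: algebra_simps eq_neg_iff_add_eq_0)
qed

lemma cf_dpar:
  assumes ts: "torus_smooth \<psi>"
  shows "cf k (dpar js \<psi>) = mlt js (- k) * cf k \<psi>"
proof (induction js)
  case Nil then show ?case by (simp add: dpar_Nil mlt_def)
next
  case (Cons j js)
  have "cf k (dpar (j#js) \<psi>) = - (\<i> * of_int (k j)) * cf k (dpar js \<psi>)"
    unfolding dpar_Cons by (rule cf_pd[OF ts_dpar[OF ts]])
  then show ?case by (simp add: Cons mlt_Cons)
qed

lemma content_TT: "measure lborel (TT::(real^'n::finite) set) = (2*pi) ^ CARD('n)"
proof -
  have "0 \<in> (TT::(real^'n) set)" by (simp add: mem_box_cart)
  then have "(TT::(real^'n) set) \<noteq> {}" by blast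
  then show ?thesis by (simp add: content_cbox_cart)
qed

lemma bounded_on_TT:
  assumes "continuous_on UNIV (f :: real^'n::finite \<Rightarrow> complex)"
  obtains B where "B \<ge> 0" "\<And>x. x \<in> TT \<Longrightarrow> norm (f x) \<le> B"
proof -
  have "compact (f ` TT)" by (rule compact_continuous_image[OF continuous_on_subset[OF assms]]) auto
  then obtain B where "B > 0" "\<And>y. y \<in> f ` TT \<Longrightarrow> norm y \<le> B"
    using compact_imp_bounded bounded_pos by metis
  then show ?thesis using that[of B] by auto
qed

lemma cf_bound:
  fixes f :: "real^'n::finite \<Rightarrow> complex"
  assumes "continuous_on UNIV f" "\<And>x. x \<in> TT \<Longrightarrow> norm (f x) \<le> B"
  shows "norm (cf k f) \<le> B * (2*pi) ^ CARD('n)"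
proof -
  have "norm (cf k f) \<le> integral (TT::(real^'n) set) (\<lambda>x. B)"
  proof -
    have i1: "(\<lambda>x. f x * ee k x) integrable_on TT"
      by (rule integrable_continuous) (intro continuous_intros continuous_on_subset[OF assms(1)], auto)
    show ?thesis unfolding cf_def
      by (rule integral_norm_bound_integral[OF i1 integrable_const]) (simp add: norm_mult assms(2))
  qed
  also have "\<dots> = B * (2*pi) ^ CARD('n)" by (simp add: content_TT)
  finally show ?thesis .
qed

lemma norm_mlt_replicate: "norm (mlt (replicate m j) k) = \<bar>real_of_int (k j)\<bar> ^ m"
  by (simp add: mlt_def map_replicate prod_list_replicate norm_power norm_mult)

lemma cf_decay:
  fixes \<psi> :: "real^'n::finite \<Rightarrow> complex"
  assumes ts: "torus_smooth \<psi>"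
  shows "\<exists>C. \<forall>k. norm (cf k \<psi>) * (1 + nk k) ^ m \<le> C"
proof -
  define V where "V = (2*pi::real) ^ CARD('n)"
  have V: "V \<ge> 0" by (simp add: V_def)
  have "\<forall>js. \<exists>B. B \<ge> 0 \<and> (\<forall>x\<in>TT. norm (dpar js \<psi> x) \<le> B)"
    using bounded_on_TT[OF ts_cont[OF ts_dpar[OF ts]]] by metis
  then obtain B where B: "\<And>js. B js \<ge> 0" "\<And>js x. x \<in> TT \<Longrightarrow> norm (dpar js \<psi> x) \<le> B js"
    by metis
  define C where "C = (1 + real CARD('n)) ^ m * V * (B [] + (\<Sum>j\<in>UNIV. B (replicate m j)))"
  have Bs: "(\<Sum>j\<in>UNIV. B (replicate m j)) \<ge> 0" by (simp add: sum_nonneg B(1))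
  have cfb: "norm (cf k (dpar js \<psi>)) \<le> B js * V" for k js
    unfolding V_def by (rule cf_bound[OF ts_cont[OF ts_dpar[OF ts]] B(2)])
  show ?thesis
  proof (intro exI allI)
    fix k :: "'n \<Rightarrow> int"
    obtain j where j: "\<And>i. \<bar>real_of_int (k i)\<bar> \<le> \<bar>real_of_int (k j)\<bar>"
    proof -
      define f where "f i = \<bar>real_of_int (k i)\<bar>" for i
      have "Max (range f) \<in> range f" by (rule Max_in) auto
      then obtain j where jj: "Max (range f) = f j" by (rule rangeE) simp
      have "f i \<le> f j" for i unfolding jj[symmetric] by (rule Max_ge) auto
      then show ?thesis using that[of j] unfolding f_def by blast
    qed
    have nkb: "nk k \<le> real CARD('n) * \<bar>real_of_int (k j)\<bar>"
      unfolding nk_def using sum_bounded_above[of UNIV "\<lambda>i. \<bar>real_of_int (k i)\<bar>", OF j] by simp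
    show "norm (cf k \<psi>) * (1 + nk k) ^ m \<le> C"
    proof (cases "k j = 0")
      case True
      then have "nk k = 0" using nkb nk_nonneg[of k] by simp
      then have "norm (cf k \<psi>) * (1 + nk k) ^ m = norm (cf k (dpar [] \<psi>))" by (simp add: dpar_Nil)
      also have "\<dots> \<le> B [] * V" by (rule cfb)
      also have "\<dots> \<le> C"
      proof -
        have "B [] * V \<le> (B [] + (\<Sum>j\<in>UNIV. B (replicate m j))) * V"
          using Bs V by (intro mult_right_mono) auto
        also have "\<dots> \<le> (1 + real CARD('n)) ^ m * ((B [] + (\<Sum>j\<in>UNIV. B (replicate m j))) * V)"
        proof -
          have o: "1 \<le> (1 + real CARD('n)) ^ m" by (rule one_le_power) simp
          have "0 \<le> (B [] + (\<Sum>j\<in>UNIV. B (replicate m j))) * V"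
            using Bs V B(1)[of "[]"] by simp
          from mult_right_mono[OF o this] show ?thesis by simp
        qed
        finally show ?thesis by (simp add: C_def algebra_simps)
      qed
      finally show ?thesis .
    next
      case False
      then have kj: "\<bar>real_of_int (k j)\<bar> \<ge> 1" by linarith
      have "(1 + nk k) \<le> (1 + real CARD('n)) * \<bar>real_of_int (k j)\<bar>"
        using nkb kj by (simp add: algebra_simps)
      then have p: "(1 + nk k) ^ m \<le> (1 + real CARD('n)) ^ m * \<bar>real_of_int (k j)\<bar> ^ m"
        using nk_nonneg[of k] by (metis power_mono power_mult_distrib add_nonneg_nonneg zero_le_one)
      have "norm (cf k \<psi>) * \<bar>real_of_int (k j)\<bar> ^ m = norm (cf k (dpar (replicate m j) \<psi>))"
        by (simp add: cf_dpar[OF ts] norm_mult norm_mlt_replicate)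
      also have "\<dots> \<le> B (replicate m j) * V" by (rule cfb)
      also have "\<dots> \<le> (B [] + (\<Sum>j\<in>UNIV. B (replicate m j))) * V"
      proof -
        have "B (replicate m j) \<le> (\<Sum>j\<in>UNIV. B (replicate m j))"
          by (rule member_le_sum) (auto intro: B(1))
        then show ?thesis using V B(1)[of "[]"] by (intro mult_right_mono) auto
      qed
      finally have q: "norm (cf k \<psi>) * \<bar>real_of_int (k j)\<bar> ^ m \<le> (B [] + (\<Sum>j\<in>UNIV. B (replicate m j))) * V" .
      have "norm (cf k \<psi>) * (1 + nk k) ^ m \<le> norm (cf k \<psi>) * ((1 + real CARD('n)) ^ m * \<bar>real_of_int (k j)\<bar> ^ m)"
        by (rule mult_left_mono[OF p]) simp
      also have "\<dots> = (1 + real CARD('n)) ^ m * (norm (cf k \<psi>) * \<bar>real_of_int (k j)\<bar> ^ m)"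
        by (simp add: algebra_simps)
      also have "\<dots> \<le> (1 + real CARD('n)) ^ m * ((B [] + (\<Sum>j\<in>UNIV. B (replicate m j))) * V)"
        by (rule mult_left_mono[OF q]) simp
      finally show ?thesis by (simp add: C_def algebra_simps)
    qed
  qed
qed


inductive trig :: "(real^'n::finite \<Rightarrow> complex) \<Rightarrow> bool" where
  trig_ee: "trig (\<lambda>x. c * ee k x)"
| trig_add: "trig F \<Longrightarrow> trig G \<Longrightarrow> trig (\<lambda>x. F x + G x)"

lemma ee_add: "ee k x * ee l x = ee (\<lambda>i. k i + l i) x"
  unfolding ee_def by (simp add: exp_add[symmetric] sum.distrib algebra_simps)

lemma ee_zero: "ee (\<lambda>i. 0) x = 1"
  unfolding ee_def by simp

lemma trig_const: "trig (\<lambda>x. c)"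
  using trig_ee[of c "\<lambda>i. 0"] by (simp add: ee_zero)

lemma trig_mult_ee: "trig G \<Longrightarrow> trig (\<lambda>x. (c * ee k x) * G x)"
proof (induction rule: trig.induct)
  case (trig_ee d l)
  have "(\<lambda>x. c * ee k x * (d * ee l x)) = (\<lambda>x. (c * d) * ee (\<lambda>i. k i + l i) x)"
    by (rule ext) (simp add: ee_add[symmetric] algebra_simps)
  then show ?case by (simp add: trig.trig_ee)
next
  case (trig_add F G)
  then show ?case using trig.trig_add[OF trig_add.IH] by (simp add: algebra_simps)
qed

lemma trig_mult: "trig F \<Longrightarrow> trig G \<Longrightarrow> trig (\<lambda>x. F x * G x)"
proof (induction rule: trig.induct)
  case (trig_ee c k) then show ?case by (rule trig_mult_ee)
next
  case (trig_add F1 F2)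
  then show ?case using trig.trig_add[OF trig_add.IH] by (simp add: algebra_simps)
qed

lemma trig_cmult: "trig F \<Longrightarrow> trig (\<lambda>x. c * F x)"
  using trig_mult[OF trig_const] .

lemma trig_sum: "finite A \<Longrightarrow> (\<And>a. a \<in> A \<Longrightarrow> trig (F a)) \<Longrightarrow> trig (\<lambda>x. \<Sum>a\<in>A. F a x)"
proof (induction A rule: finite_induct)
  case empty then show ?case using trig_const[of 0] by simp
next
  case (insert a A)
  then show ?case using trig_add[of "F a" "\<lambda>x. \<Sum>a\<in>A. F a x"] by simp
qed

lemma trig_cont: "trig F \<Longrightarrow> continuous_on A F"
  by (induction rule: trig.induct) (auto intro!: continuous_intros)

lemma trig_orth:
  assumes h: "continuous_on UNIV h" and z: "\<And>k. cf k h = 0"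
  shows "trig F \<Longrightarrow> integral TT (\<lambda>x. h x * F x) = 0"
proof (induction rule: trig.induct)
  case (trig_ee c k)
  have "integral TT (\<lambda>x. h x * (c * ee k x)) = integral TT (\<lambda>x. c * (h x * ee k x))"
    by (simp add: algebra_simps)
  also have "\<dots> = c * cf k h" unfolding cf_def by simp
  finally show ?case using z by simp
next
  case (trig_add F G)
  have iF: "(\<lambda>x. h x * F x) integrable_on TT"
    by (rule integrable_continuous) (intro continuous_intros continuous_on_subset[OF h] trig_cont trig_add.hyps, auto)
  have iG: "(\<lambda>x. h x * G x) integrable_on TT"
    by (rule integrable_continuous) (intro continuous_intros continuous_on_subset[OF h] trig_cont trig_add.hyps, auto)
  have "integral TT (\<lambda>x. h x * (F x + G x)) = integral TT (\<lambda>x. h x * F x + h x * G x)"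
    by (simp add: algebra_simps)
  also have "\<dots> = 0" using integral_add[OF iF iG] trig_add.IH by simp
  finally show ?case .
qed

definition phi :: "real^'n::finite \<Rightarrow> complex^'n" where
  "phi x = (\<chi> i. exp (\<i> * of_real (x$i)))"

definition delta :: "'n::finite \<Rightarrow> 'n \<Rightarrow> int" where
  "delta i = (\<lambda>l. if l = i then 1 else 0)"

lemma ee_delta: "ee (delta i) x = exp (\<i> * of_real (x$i))"
proof -
  have "(\<Sum>l\<in>UNIV. real_of_int (delta i l) * x $ l) = (\<Sum>l\<in>UNIV. if l = i then x$l else 0)"
    by (rule sum.cong) (auto simp: delta_def)
  then have "(\<Sum>l\<in>UNIV. real_of_int (delta i l) * x $ l) = x$i" by simp
  then show ?thesis by (simp add: ee_def)
qed

lemma ee_mdelta: "ee ((\<lambda>l. - delta i l)) x = exp (- (\<i> * of_real (x$i)))"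
proof -
  have "(\<Sum>l\<in>UNIV. real_of_int (- delta i l) * x $ l) = (\<Sum>l\<in>UNIV. if l = i then - x$l else 0)"
    by (rule sum.cong) (auto simp: delta_def)
  then have "(\<Sum>l\<in>UNIV. real_of_int (- delta i l) * x $ l) = - x$i" by simp
  then show ?thesis by (simp add: ee_def)
qed

lemma trig_cos: fixes i :: "'n::finite" shows "trig (\<lambda>x. of_real (cos (x$i)))"
proof -
  have eq: "(\<lambda>x. of_real (cos (x$i))) = (\<lambda>x. (1/2) * ee (delta i) x + (1/2) * ee ((\<lambda>l. - delta i l)) x)"
  proof
    fix x :: "real^'n"
    have "complex_of_real (cos (x$i)) = cos (complex_of_real (x$i))" by (rule cos_of_real[symmetric])
    also have "\<dots> = (exp (\<i> * of_real (x$i)) + exp (- (\<i> * of_real (x$i)))) / 2" by (rule cos_exp_eq)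
    also have "\<dots> = (1/2) * ee (delta i) x + (1/2) * ee ((\<lambda>l. - delta i l)) x"
      by (simp add: ee_delta ee_mdelta add_divide_distrib)
    finally show "complex_of_real (cos (x$i)) = (1/2) * ee (delta i) x + (1/2) * ee ((\<lambda>l. - delta i l)) x" .
  qed
  show ?thesis unfolding eq by (rule trig_add[OF trig_ee trig_ee])
qed

lemma trig_sin: fixes i :: "'n::finite" shows "trig (\<lambda>x. of_real (sin (x$i)))"
proof -
  have eq: "(\<lambda>x. of_real (sin (x$i))) = (\<lambda>x. (1/(2*\<i>)) * ee (delta i) x + (-1/(2*\<i>)) * ee ((\<lambda>l. - delta i l)) x)"
  proof
    fix x :: "real^'n"
    have "complex_of_real (sin (x$i)) = sin (complex_of_real (x$i))" by (rule sin_of_real[symmetric])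
    also have "\<dots> = (exp (\<i> * of_real (x$i)) - exp (- (\<i> * of_real (x$i)))) / (2*\<i>)" by (rule sin_exp_eq)
    also have "\<dots> = (1/(2*\<i>)) * ee (delta i) x + (-1/(2*\<i>)) * ee ((\<lambda>l. - delta i l)) x"
      by (simp add: ee_delta ee_mdelta diff_divide_distrib algebra_simps)
    finally show "complex_of_real (sin (x$i)) = (1/(2*\<i>)) * ee (delta i) x + (-1/(2*\<i>)) * ee ((\<lambda>l. - delta i l)) x" .
  qed
  show ?thesis unfolding eq by (rule trig_add[OF trig_ee trig_ee])
qed

lemma trig_inner_basis:
  assumes "b \<in> Basis"
  shows "trig (\<lambda>x. complex_of_real (phi x \<bullet> b))"
proof -
  from assms obtain i u where b: "b = axis i u" and u: "u \<in> Basis"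
    unfolding Basis_vec_def by auto
  from u have "u = 1 \<or> u = \<i>" by (simp add: Basis_complex_def)
  then show ?thesis
  proof
    assume "u = 1"
    then have "(\<lambda>x. complex_of_real (phi x \<bullet> b)) = (\<lambda>x. of_real (cos (x$i)))"
      by (simp add: b inner_axis phi_def Re_exp)
    then show ?thesis using trig_cos by simp
  next
    assume "u = \<i>"
    then have "(\<lambda>x. complex_of_real (phi x \<bullet> b)) = (\<lambda>x. of_real (sin (x$i)))"
      by (simp add: b inner_axis phi_def Im_exp)
    then show ?thesis using trig_sin by simp
  qed
qed

lemma rpf_trig:
  fixes p :: "complex^'n::finite \<Rightarrow> real"
  shows "real_polynomial_function p \<Longrightarrow> trig (\<lambda>x. complex_of_real (p (phi x)))"
proof (induction rule: real_polynomial_function.induct)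
  case (linear f)
  have lf: "linear f" using linear by (rule bounded_linear.linear)
  have fz: "f z = (\<Sum>b\<in>Basis. (z \<bullet> b) * f b)" for z
  proof -
    have "f z = f (\<Sum>b\<in>Basis. (z \<bullet> b) *\<^sub>R b)" by (simp add: euclidean_representation)
    also have "\<dots> = (\<Sum>b\<in>Basis. (z \<bullet> b) *\<^sub>R f b)"
      by (simp add: linear_sum[OF lf] linear_scale[OF lf])
    finally show ?thesis by simp
  qed
  have "(\<lambda>x. complex_of_real (f (phi x))) =
             (\<lambda>x. \<Sum>b\<in>Basis. complex_of_real (phi x \<bullet> b) * complex_of_real (f b))"
  proof
    fix x :: "real^'n"
    show "complex_of_real (f (phi x)) = (\<Sum>b\<in>Basis. complex_of_real (phi x \<bullet> b) * complex_of_real (f b))"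
      by (subst fz) (simp only: of_real_sum of_real_mult)
  qed
  moreover have "trig (\<lambda>x. \<Sum>b\<in>Basis. complex_of_real (phi x \<bullet> b) * complex_of_real (f b))"
    by (intro trig_sum trig_mult trig_inner_basis trig_const) auto
  ultimately show ?case by simp
next
  case (const c) then show ?case by (rule trig_const)
next
  case (add f g) then show ?case by (simp add: trig_add)
next
  case (mult f g) then show ?case by (simp add: trig_mult)
qed

lemma pf_trig:
  fixes g :: "complex^'n::finite \<Rightarrow> complex"
  assumes "polynomial_function g"
  shows "trig (\<lambda>x. g (phi x))"
proof -
  have r1: "real_polynomial_function (\<lambda>z. g z \<bullet> 1)" and r2: "real_polynomial_function (\<lambda>z. g z \<bullet> \<i>)"
    using assms unfolding polynomial_function_iff_Basis_inner by (auto simp: Basis_complex_def)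
  have "(\<lambda>x. g (phi x)) = (\<lambda>x. complex_of_real (g (phi x) \<bullet> 1) + \<i> * complex_of_real (g (phi x) \<bullet> \<i>))"
    by (rule ext) (simp add: complex_eq_iff)
  moreover have "trig (\<lambda>x. complex_of_real (g (phi x) \<bullet> 1) + \<i> * complex_of_real (g (phi x) \<bullet> \<i>))"
    by (intro trig_add trig_cmult rpf_trig[OF r1] rpf_trig[OF r2])
  ultimately show ?thesis by simp
qed


lemma per_nat:
  assumes per: "\<And>x. h (x + (2*pi) *\<^sub>R axis j 1) = h x"
  shows "h (x + (2*pi * real n) *\<^sub>R axis j 1) = h x"
proof (induction n)
  case 0 then show ?case by simp
next
  case (Suc n)
  have "x + (2*pi * real (Suc n)) *\<^sub>R axis j 1 = (x + (2*pi * real n) *\<^sub>R axis j 1) + (2*pi) *\<^sub>R axis j 1"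
    by (simp add: algebra_simps)
  then show ?case using per Suc by metis
qed

lemma per_int:
  assumes per: "\<And>x. h (x + (2*pi) *\<^sub>R axis j 1) = h x"
  shows "h (x + (2*pi * of_int m) *\<^sub>R axis j 1) = h x"
proof (cases "m \<ge> 0")
  case True
  define n where "n = nat m"
  have "m = int n" using True by (simp add: n_def)
  then show ?thesis using per_nat[of h j x n] per by simp
next
  case False
  define n where "n = nat (- m)"
  have n: "m = - int n" using False by (simp add: n_def)
  have "h ((x + (2*pi * of_int m) *\<^sub>R axis j 1) + (2*pi * real n) *\<^sub>R axis j 1) = h (x + (2*pi * of_int m) *\<^sub>R axis j 1)"
    by (rule per_nat[of h j]) (rule per)
  moreover have "(x + (2*pi * of_int m) *\<^sub>R axis j 1) + (2*pi * real n) *\<^sub>R axis j 1 = x"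
    by (simp add: n algebra_simps)
  ultimately show ?thesis by simp
qed

lemma per_sum:
  assumes per: "torus_periodic h" and fin: "finite S"
  shows "h (x + (\<Sum>j\<in>S. (2*pi * of_int (m j)) *\<^sub>R axis j 1)) = h x"
  using fin
proof (induction S rule: finite_induct)
  case empty then show ?case by simp
next
  case (insert j S)
  have "h (x + (\<Sum>j\<in>insert j S. (2*pi * of_int (m j)) *\<^sub>R axis j 1)) =
        h ((x + (\<Sum>j\<in>S. (2*pi * of_int (m j)) *\<^sub>R axis j 1)) + (2*pi * of_int (m j)) *\<^sub>R axis j 1)"
    using insert by (simp add: algebra_simps)
  also have "\<dots> = h (x + (\<Sum>j\<in>S. (2*pi * of_int (m j)) *\<^sub>R axis j 1))"
    by (rule per_int) (use per in \<open>auto simp: torus_periodic_def\<close>)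
  finally show ?case using insert by simp
qed

lemma per_vec:
  assumes per: "torus_periodic h"
  shows "h (x + (\<chi> i. 2*pi * of_int (m i))) = h x"
proof -
  have "(\<chi> i. 2*pi * of_int (m i)) = (\<Sum>j\<in>UNIV. (2*pi * of_int (m j)) *\<^sub>R axis j (1::real))"
    using basis_expansion[of "(\<chi> i. 2*pi * of_int (m i)) :: real^'a"]
    by (simp add: scalar_mult_eq_scaleR)
  then show ?thesis using per_sum[OF per, of UNIV x m] by simp
qed

lemma reduce_TT:
  fixes x :: "real^'n::finite"
  shows "\<exists>y\<in>TT. \<exists>m. x = y + (\<chi> i. 2*pi * of_int (m i))"
proof -
  define m where "m i = \<lfloor>x$i / (2*pi)\<rfloor>" for i
  define y where "y = x - (\<chi> i. 2*pi * of_int (m i))"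
  have "y \<in> TT"
    unfolding mem_box_cart
  proof (intro allI conjI)
    fix i
    have pp: "2*pi > 0" by simp
    have a: "of_int (m i) \<le> x$i / (2*pi)" unfolding m_def by (rule of_int_floor_le)
    have b: "x$i / (2*pi) < of_int (m i) + 1" unfolding m_def by (rule real_of_int_floor_add_one_gt)
    from a have "2*pi * of_int (m i) \<le> x$i" using pp by (simp add: field_simps)
    then show "(0::real^'n) $ i \<le> y $ i" by (simp add: y_def)
    from b have "x$i < 2*pi * of_int (m i) + 2*pi" using pp by (simp add: field_simps)
    then show "y $ i \<le> tb $ i" by (simp add: y_def)
  qed
  moreover have "x = y + (\<chi> i. 2*pi * of_int (m i))" by (simp add: y_def)
  ultimately show ?thesis by blast
qed

lemma phi_eq:
  assumes per: "torus_periodic h" and e: "phi x = phi y"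
  shows "h x = h y"
proof -
  have "\<forall>i. \<exists>n::int. x$i = y$i + 2*pi * of_int n"
  proof
    fix i
    from e have "phi x $ i = phi y $ i" by simp
    then have "exp (\<i> * of_real (x$i)) = exp (\<i> * of_real (y$i))"
      unfolding phi_def by simp
    then obtain n :: int where "\<i> * of_real (x$i) = \<i> * of_real (y$i) + (of_int (2 * n) * pi) * \<i>"
      unfolding exp_eq by blast
    then have "Im (\<i> * of_real (x$i)) = Im (\<i> * of_real (y$i) + (of_int (2 * n) * pi) * \<i>)" by simp
    then have "x$i = y$i + 2*pi * of_int n" by simp
    then show "\<exists>n::int. x$i = y$i + 2*pi * of_int n" by blast
  qed
  from choice[OF this] obtain m where m: "\<And>i. x$i = y$i + 2*pi * of_int (m i)" by blast
  have "x = y + (\<chi> i. 2*pi * of_int (m i))" by (simp add: vec_eq_iff m)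
  then show ?thesis using per_vec[OF per, of y m] by simp
qed

lemma continuous_phi: "continuous_on A phi"
  unfolding phi_def by (intro continuous_intros)

lemma completeness:
  fixes h :: "real^'n::finite \<Rightarrow> complex"
  assumes cont: "continuous_on UNIV h" and per: "torus_periodic h" and z: "\<And>k. cf k h = 0"
  shows "h x = 0"
proof -
  define K where "K = phi ` (TT::(real^'n) set)"
  define H where "H z = cnj (h (inv_into TT phi z))" for z
  have cK: "compact K" unfolding K_def by (intro compact_continuous_image continuous_phi compact_cbox)
  have HPhi: "H (phi x) = cnj (h x)" if x: "x \<in> TT" for x
  proof -
    have "phi (inv_into TT phi (phi x)) = phi x" using x by (simp add: f_inv_into_f)
    then have "h (inv_into TT phi (phi x)) = h x" by (rule phi_eq[OF per])
    then show ?thesis unfolding H_def by simp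
  qed
  have contH: "continuous_on K H"
  proof -
    have q: "quotient_map (top_of_set TT) (top_of_set K) phi"
    proof (rule continuous_imp_quotient_map)
      show "continuous_map (top_of_set TT) (top_of_set K) phi"
        by (simp add: continuous_map_in_subtopology continuous_phi K_def)
      show "compact_space (top_of_set (TT::(real^'n) set))"
        by (rule compact_space_subtopology) simp
      show "Hausdorff_space (top_of_set K)"
        by (rule Hausdorff_space_subtopology) simp
      show "phi ` topspace (top_of_set TT) = topspace (top_of_set K)"
        by (simp add: K_def)
    qed
    have "continuous_on TT (H \<circ> phi)"
    proof (rule continuous_on_eq[of _ "\<lambda>x. cnj (h x)"])
      show "continuous_on TT (\<lambda>x. cnj (h x))"
        by (intro continuous_intros continuous_on_subset[OF cont]) auto
    qed (simp add: HPhi)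
    then have "continuous_map (top_of_set TT) euclidean (H \<circ> phi)" by simp
    from continuous_compose_quotient_map[OF q this] show ?thesis by simp
  qed
  obtain B where B: "B \<ge> 0" "\<And>x. x \<in> TT \<Longrightarrow> norm (h x) \<le> B"
    using bounded_on_TT[OF cont] by blast
  define V where "V = (2*pi::real) ^ CARD('n)"
  have V: "V > 0" by (simp add: V_def)
  define I where "I = integral TT (\<lambda>x. h x * cnj (h x))"
  have ih: "(\<lambda>x. h x * f x) integrable_on TT" if "continuous_on UNIV f" for f
    by (rule integrable_continuous) (intro continuous_intros continuous_on_subset[OF cont] continuous_on_subset[OF that], auto)
  have Ibound: "norm I \<le> \<epsilon> * (B * V)" if eps: "\<epsilon> > 0" for \<epsilon>
  proof -
    obtain g where g: "polynomial_function g" "\<And>z. z \<in> K \<Longrightarrow> norm (H z - g z) < \<epsilon>"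
      using Stone_Weierstrass_polynomial_function[OF cK contH eps] by blast
    have tg: "trig (\<lambda>x. g (phi x))" by (rule pf_trig[OF g(1)])
    have cg: "continuous_on UNIV (\<lambda>x. g (phi x))" by (rule trig_cont[OF tg])
    have cc: "continuous_on UNIV (\<lambda>x. cnj (h x))" by (intro continuous_intros cont)
    have z0: "integral TT (\<lambda>x. h x * g (phi x)) = 0" by (rule trig_orth[OF cont z tg])
    have "I = integral TT (\<lambda>x. h x * cnj (h x)) - integral TT (\<lambda>x. h x * g (phi x))"
      using z0 by (simp add: I_def)
    also have "\<dots> = integral TT (\<lambda>x. h x * cnj (h x) - h x * g (phi x))"
      by (rule integral_diff[OF ih[OF cc] ih[OF cg], symmetric])
    finally have I2: "I = integral TT (\<lambda>x. h x * (cnj (h x) - g (phi x)))"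
      by (simp add: algebra_simps)
    have "norm I \<le> integral (TT::(real^'n) set) (\<lambda>x. B * \<epsilon>)"
      unfolding I2
    proof (rule integral_norm_bound_integral)
      show "(\<lambda>x. h x * (cnj (h x) - g (phi x))) integrable_on TT"
        by (rule ih) (intro continuous_intros cc cg)
      show "(\<lambda>x. B * \<epsilon>) integrable_on TT" by (rule integrable_const)
      fix x :: "real^'n" assume x: "x \<in> TT"
      have "norm (cnj (h x) - g (phi x)) \<le> \<epsilon>"
        using g(2)[of "phi x"] x HPhi[OF x] by (auto simp: K_def)
      then show "norm (h x * (cnj (h x) - g (phi x))) \<le> B * \<epsilon>"
        unfolding norm_mult using B x eps by (intro mult_mono) auto
    qed
    also have "\<dots> = \<epsilon> * (B * V)" by (simp add: content_TT V_def)
    finally show ?thesis .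
  qed
  have I0: "I = 0"
  proof -
    have "norm I \<le> 0"
    proof (rule field_le_epsilon)
      fix \<epsilon> :: real assume e: "\<epsilon> > 0"
      show "norm I \<le> 0 + \<epsilon>"
      proof (cases "B = 0")
        case True then show ?thesis using Ibound[OF e] e by simp
      next
        case False
        then have bv: "B * V > 0" using B V by simp
        have "norm I \<le> (\<epsilon> / (B * V)) * (B * V)" by (rule Ibound) (use e bv in simp)
        then show ?thesis using bv False V by simp
      qed
    qed
    then show ?thesis by simp
  qed
  define r where "r x = (cmod (h x))^2" for x
  have cr: "continuous_on UNIV r" unfolding r_def by (intro continuous_intros cont)
  have ir: "(r has_integral integral TT r) TT"
    by (rule integrable_integral, rule integrable_continuous, rule continuous_on_subset[OF cr]) auto
  have "((\<lambda>x. complex_of_real (r x)) has_integral complex_of_real (integral TT r)) TT"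
    using has_integral_linear[OF ir bounded_linear_of_real] by (simp add: o_def)
  moreover have "(\<lambda>x. complex_of_real (r x)) = (\<lambda>x. h x * cnj (h x))"
    by (rule ext) (simp only: r_def complex_norm_square)
  ultimately have "((\<lambda>x. h x * cnj (h x)) has_integral complex_of_real (integral TT r)) TT" by simp
  then have "I = complex_of_real (integral TT r)" unfolding I_def by (rule integral_unique)
  then have "integral TT r = 0" using I0 by simp
  then have r0: "(r has_integral 0) TT" using ir by simp
  have hT: "h y = 0" if y: "y \<in> TT" for y
  proof -
    have "r y = 0"
    proof (rule has_integral_0_cbox_imp_0[OF continuous_on_subset[OF cr] _ r0])
      show "box 0 (tb::real^'n) \<noteq> {}"
        by (simp add: box_ne_empty Basis_vec_def cart_eq_inner_axis[symmetric] inner_axis)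
    qed (auto simp: r_def y)
    then show ?thesis by (simp add: r_def)
  qed
  obtain y m where y: "y \<in> TT" "x = y + (\<chi> i. 2*pi * of_int (m i))" using reduce_TT[of x] by blast
  show ?thesis using per_vec[OF per, of y m] hT[OF y(1)] y(2) by simp
qed


definition kap :: "nat \<Rightarrow> ('n::finite \<Rightarrow> int)" where
  "kap = from_nat_into UNIV"

lemma infinite_fun_int: "infinite (UNIV :: ('n::finite \<Rightarrow> int) set)"
proof
  assume f: "finite (UNIV :: ('n \<Rightarrow> int) set)"
  have "inj (\<lambda>c::int. (\<lambda>_::'n. c))" by (rule injI) (metis)
  then have "finite (UNIV :: int set)"
    using finite_imageD[OF finite_subset[OF subset_UNIV f]] by blast
  then show False by simp
qed

lemma bij_kap: "bij (kap :: nat \<Rightarrow> ('n::finite \<Rightarrow> int))"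
  unfolding kap_def by (rule bij_betw_from_nat_into[OF _ infinite_fun_int]) simp

lemma nk_ge: "\<bar>real_of_int (k i)\<bar> \<le> nk k"
  unfolding nk_def by (rule member_le_sum) auto

lemma box_sum_aux:
  "(\<Sum>i\<in>{- int R..int R}. 1 / (1 + \<bar>real_of_int i\<bar>)^2) \<le> 3 - 2 / (real R + 1)"
proof (induction R)
  case 0 then show ?case by simp
next
  case (Suc R)
  have set: "{- int (Suc R)..int (Suc R)} = insert (- int (Suc R)) (insert (int (Suc R)) {- int R..int R})"
    by auto
  have "(\<Sum>i\<in>{- int (Suc R)..int (Suc R)}. 1 / (1 + \<bar>real_of_int i\<bar>)^2) =
        2 / (real R + 2)^2 + (\<Sum>i\<in>{- int R..int R}. 1 / (1 + \<bar>real_of_int i\<bar>)^2)"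
    unfolding set by (simp add: algebra_simps)
  also have "\<dots> \<le> 2 / (real R + 2)^2 + (3 - 2 / (real R + 1))" using Suc by simp
  also have "\<dots> \<le> 3 - 2 / (real (Suc R) + 1)"
  proof -
    have r: "real R \<ge> 0" by simp
    have d1: "real R + 1 > 0" and d2: "real R + 2 > 0" using r by auto
    have "2 / (real R + 2)^2 + 2 / (real R + 2) \<le> 2 / (real R + 1)"
      using d1 d2 by (simp add: divide_simps) (simp add: algebra_simps power2_eq_square)
    then show ?thesis by (simp add: algebra_simps)
  qed
  finally show ?case .
qed

lemma box_sum: "(\<Sum>i\<in>{- int R..int R}. 1 / (1 + \<bar>real_of_int i\<bar>)^2) \<le> 3"
  using box_sum_aux[of R] by (smt (verit) divide_nonneg_nonneg of_nat_0_le_iff)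

lemma weight_le:
  fixes k :: "'n::finite \<Rightarrow> int"
  shows "1 / (1 + nk k) ^ (2 * CARD('n)) \<le> (\<Prod>i\<in>UNIV. 1 / (1 + \<bar>real_of_int (k i)\<bar>)^2)"
proof -
  have "1 / (1 + nk k) ^ (2 * CARD('n)) = (\<Prod>i\<in>(UNIV::'n set). 1 / (1 + nk k)^2)"
    by (simp add: power_mult power_one_over)
  also have "\<dots> \<le> (\<Prod>i\<in>UNIV. 1 / (1 + \<bar>real_of_int (k i)\<bar>)^2)"
  proof (rule prod_mono)
    fix i :: 'n
    have a: "1 + \<bar>real_of_int (k i)\<bar> \<le> 1 + nk k" using nk_ge[of k i] by simp
    have "(1 + \<bar>real_of_int (k i)\<bar>)^2 \<le> (1 + nk k)^2" by (rule power_mono[OF a]) simp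
    then show "0 \<le> 1 / (1 + nk k)^2 \<and> 1 / (1 + nk k)^2 \<le> 1 / (1 + \<bar>real_of_int (k i)\<bar>)^2"
      using nk_nonneg[of k] by (auto intro!: divide_left_mono simp: add_pos_nonneg)
  qed
  finally show ?thesis .
qed

lemma summable_weight:
  "summable (\<lambda>n. 1 / (1 + nk (kap n :: 'n::finite \<Rightarrow> int)) ^ (2 * CARD('n)))"
proof (rule summableI_nonneg_bounded)
  fix n show "0 \<le> 1 / (1 + nk (kap n :: 'n \<Rightarrow> int)) ^ (2 * CARD('n))"
    using nk_nonneg[of "kap n"] by simp
next
  fix M
  define w where "w k = 1 / (1 + nk (k :: 'n \<Rightarrow> int)) ^ (2 * CARD('n))" for k
  define S where "S = (kap :: nat \<Rightarrow> ('n \<Rightarrow> int)) ` {..<M}"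
  define R where "R = nat (\<Sum>k\<in>S. \<Sum>i\<in>UNIV. \<bar>k i\<bar>)"
  define Box where "Box = PiE (UNIV :: 'n set) (\<lambda>_. {- int R..int R})"
  have inj: "inj_on (kap :: nat \<Rightarrow> ('n \<Rightarrow> int)) {..<M}"
    using bij_kap by (auto simp: bij_def intro: inj_on_subset)
  have SB: "S \<subseteq> Box"
  proof
    fix k assume k: "k \<in> S"
    have "\<bar>k i\<bar> \<le> int R" for i
    proof -
      have "\<bar>k i\<bar> \<le> (\<Sum>i\<in>UNIV. \<bar>k i\<bar>)" by (rule member_le_sum) auto
      also have "\<dots> \<le> (\<Sum>k\<in>S. \<Sum>i\<in>UNIV. \<bar>k i\<bar>)"
        by (rule member_le_sum[OF k]) (auto intro: sum_nonneg simp: S_def)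
      moreover have "0 \<le> (\<Sum>k\<in>S. \<Sum>i\<in>UNIV. \<bar>k i\<bar>)" by (intro sum_nonneg) auto
      ultimately show ?thesis unfolding R_def by simp
    qed
    then have "- int R \<le> k i \<and> k i \<le> int R" for i by (simp add: abs_le_iff) (smt (verit))
    then show "k \<in> Box" unfolding Box_def by (auto simp: PiE_def extensional_def)
  qed
  have wn: "w k \<ge> 0" for k using nk_nonneg[of k] by (simp add: w_def)
  have "(\<Sum>n<M. w (kap n)) = (\<Sum>k\<in>S. w k)"
    unfolding S_def using sum.reindex[OF inj, of w] by simp
  also have "\<dots> \<le> (\<Sum>k\<in>Box. w k)"
  proof (rule sum_mono2[OF _ SB])
    show "finite Box" unfolding Box_def by (intro finite_PiE) auto
  qed (use wn in auto)
  also have "\<dots> \<le> (\<Sum>k\<in>Box. \<Prod>i\<in>UNIV. 1 / (1 + \<bar>real_of_int (k i)\<bar>)^2)"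
    unfolding w_def by (rule sum_mono) (rule weight_le)
  also have "\<dots> = (\<Prod>i\<in>(UNIV::'n set). \<Sum>y\<in>{- int R..int R}. 1 / (1 + \<bar>real_of_int y\<bar>)^2)"
    unfolding Box_def by (rule prod_sum_PiE[symmetric]) auto
  also have "\<dots> \<le> (\<Prod>i\<in>(UNIV::'n set). 3)"
    by (rule prod_mono) (auto intro: box_sum sum_nonneg)
  finally show "(\<Sum>n<M. 1 / (1 + nk (kap n :: 'n \<Rightarrow> int)) ^ (2 * CARD('n))) \<le> 3 ^ CARD('n)"
    by (simp add: w_def)
qed

lemma nk_uminus [simp]: "nk (\<lambda>i. - k i) = nk k"
  by (simp add: nk_def)

lemma rapid_of_decay:
  fixes k :: "nat \<Rightarrow> ('n::finite \<Rightarrow> int)"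
  assumes dec: "\<And>m. \<exists>C. \<forall>n. norm (a n) * (1 + nk (k n)) ^ m \<le> C"
    and sw: "summable (\<lambda>n. 1 / (1 + nk (k n)) ^ r)"
  shows "rapid a k"
  unfolding rapid_def
proof
  fix m
  obtain C where C: "\<And>n. norm (a n) * (1 + nk (k n)) ^ (m + r) \<le> C" using dec by blast
  show "summable (\<lambda>n. norm (a n) * (1 + nk (k n)) ^ m)"
  proof (rule summable_comparison_test[OF _ summable_mult[OF sw, of C]], intro exI[of _ 0] allI impI)
    fix n
    have p: "1 + nk (k n) > 0" using nk_nonneg[of "k n"] by simp
    have "norm (a n) * (1 + nk (k n)) ^ m = norm (a n) * (1 + nk (k n)) ^ (m + r) / (1 + nk (k n)) ^ r"
      using p by (simp add: power_add)
    also have "\<dots> \<le> C / (1 + nk (k n)) ^ r"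
      using C[of n] p by (intro divide_right_mono) auto
    finally show "norm (norm (a n) * (1 + nk (k n)) ^ m) \<le> C * (1 / (1 + nk (k n)) ^ r)"
      using p by simp
  qed
qed


lemma int_ee:
  "integral TT (ee l :: real^'n::finite \<Rightarrow> complex) = (if l = (\<lambda>i. 0) then complex_of_real ((2*pi) ^ CARD('n)) else 0)"
proof (cases "l = (\<lambda>i. 0)")
  case True
  have "ee l = (\<lambda>x::real^'n. 1)" by (rule ext) (simp add: True ee_zero)
  then have "integral TT (ee l :: real^'n \<Rightarrow> complex) = integral (TT::(real^'n) set) (\<lambda>x. 1)"
    by simp
  also have "\<dots> = complex_of_real ((2*pi) ^ CARD('n))" by (simp add: content_TT scaleR_conv_of_real)
  finally show ?thesis using True by simp
next
  case False
  then obtain j where j: "l j \<noteq> 0" by auto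
  have pdl: "pd j (ee l) = (\<lambda>x. \<i> * of_int (l j) * ee l x)" by (rule ext) (rule pd_ee)
  have "integral TT (pd j (ee l :: real^'n \<Rightarrow> complex)) = 0"
  proof (rule integral_pd_zero)
    show "continuous_on UNIV (ee l :: real^'n \<Rightarrow> complex)" by (rule continuous_ee)
    show "ee l (x + (2 * pi) *\<^sub>R axis j 1) = ee l x" for x :: "real^'n" by (rule ee_periodic)
    show "(\<lambda>s. ee l (y + s *\<^sub>R axis j 1)) differentiable at 0" for y :: "real^'n" by (rule ee_diff)
    show "continuous_on UNIV (pd j (ee l :: real^'n \<Rightarrow> complex))"
      unfolding pdl by (intro continuous_intros)
  qed
  then have "\<i> * of_int (l j) * integral TT (ee l :: real^'n \<Rightarrow> complex) = 0"
    unfolding pdl by simp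
  then show ?thesis using j False by simp
qed

lemma ser_integral:
  fixes \<phi> :: "real^'n::finite \<Rightarrow> complex"
  assumes sa: "summable (\<lambda>n. norm (a n))" and c: "continuous_on UNIV \<phi>"
  shows "(\<lambda>n. a n * integral TT (\<lambda>x. ee (k n) x * \<phi> x)) sums integral TT (\<lambda>x. ser a k x * \<phi> x)"
proof -
  obtain B where B: "B \<ge> 0" "\<And>x. x \<in> TT \<Longrightarrow> norm (\<phi> x) \<le> B"
    using bounded_on_TT[OF c] by blast
  define f where "f n x = a n * ee (k n) x * \<phi> x" for n x
  have ul0: "uniform_limit TT (\<lambda>N x. \<Sum>n<N. f n x) (\<lambda>x. \<Sum>n. f n x) sequentially"
  proof (rule Weierstrass_m_test)
    show "summable (\<lambda>n. norm (a n) * B)" by (rule summable_mult2[OF sa])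
    fix n x assume x: "x \<in> (TT::(real^'n) set)"
    show "norm (f n x) \<le> norm (a n) * B"
      unfolding f_def norm_mult norm_ee using B(2)[OF x] by (simp add: mult_left_mono)
  qed
  have lim: "(\<Sum>n. f n x) = ser a k x * \<phi> x" for x
    unfolding f_def ser_def by (rule suminf_mult2[symmetric, OF ser_summable[OF sa]])
  have ul: "uniform_limit TT (\<lambda>N x. \<Sum>n<N. f n x) (\<lambda>x. ser a k x * \<phi> x) sequentially"
    using ul0 unfolding lim .
  have cf: "continuous_on TT (\<lambda>x. \<Sum>n<N. f n x)" for N
    unfolding f_def by (intro continuous_intros continuous_on_subset[OF c]) auto
  obtain I J where I: "\<And>N. ((\<lambda>x. \<Sum>n<N. f n x) has_integral I N) TT"
    and J: "((\<lambda>x. ser a k x * \<phi> x) has_integral J) TT" and IJ: "I \<longlonglongrightarrow> J"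
    using uniform_limit_integral_cbox[OF ul cf] by auto
  have iN: "I N = (\<Sum>n<N. a n * integral TT (\<lambda>x. ee (k n) x * \<phi> x))" for N
  proof -
    have ie: "(\<lambda>x. ee (k n) x * \<phi> x) integrable_on TT" for n
      by (rule integrable_continuous) (intro continuous_intros continuous_on_subset[OF c], auto)
    have "I N = integral TT (\<lambda>x. \<Sum>n<N. f n x)" using I[of N] by (simp add: integral_unique)
    also have "\<dots> = (\<Sum>n<N. integral TT (f n))"
      by (rule integral_sum) (auto simp: f_def mult.assoc intro: integrable_on_mult_right ie)
    also have "\<dots> = (\<Sum>n<N. a n * integral TT (\<lambda>x. ee (k n) x * \<phi> x))"
      by (rule sum.cong) (simp_all add: f_def[abs_def] mult.assoc)
    finally show ?thesis .
  qed
  show ?thesis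
    unfolding sums_def using IJ J unfolding iN by (simp add: integral_unique)
qed

lemma cf_ser:
  assumes sa: "summable (\<lambda>n. norm (a n))"
  shows "cf k (ser a (kap :: nat \<Rightarrow> ('n::finite \<Rightarrow> int))) = a (inv kap (\<lambda>i. - k i)) * complex_of_real ((2*pi) ^ CARD('n))"
proof -
  define n0 where "n0 = inv kap (\<lambda>i. - k i)"
  have kn0: "kap n0 = (\<lambda>i. - k i)" unfolding n0_def by (rule surj_f_inv_f[OF bij_is_surj[OF bij_kap]])
  have sums: "(\<lambda>n. a n * integral TT (\<lambda>x. ee (kap n) x * ee k x)) sums cf k (ser a kap)"
    unfolding cf_def by (rule ser_integral[OF sa continuous_ee])
  have eq: "(\<lambda>n. a n * integral TT (\<lambda>x. ee (kap n) x * ee k x :: complex)) =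
            (\<lambda>n. if n = n0 then a n * complex_of_real ((2*pi) ^ CARD('n)) else 0)"
  proof
    fix n
    have "(\<lambda>i. kap n i + k i) = (\<lambda>i. 0) \<longleftrightarrow> kap n = (\<lambda>i. - k i)"
      by (simp add: fun_eq_iff eq_neg_iff_add_eq_0)
    also have "\<dots> \<longleftrightarrow> n = n0"
      using bij_kap kn0 by (metis bij_is_inj injD)
    finally have iff: "(\<lambda>i. kap n i + k i) = (\<lambda>i. 0) \<longleftrightarrow> n = n0" .
    show "a n * integral TT (\<lambda>x. ee (kap n) x * ee k x :: complex) = (if n = n0 then a n * complex_of_real ((2*pi) ^ CARD('n)) else 0)"
      by (simp add: ee_add int_ee iff)
  qed
  have "(\<lambda>n. if n = n0 then a n * complex_of_real ((2*pi) ^ CARD('n)) else 0) sums (a n0 * complex_of_real ((2*pi) ^ CARD('n)))"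
    by (rule sums_single)
  with sums eq show ?thesis by (simp add: sums_iff n0_def)
qed

lemma norm_2pi_pow: "norm ((2 * complex_of_real pi) ^ N) = (2*pi) ^ N"
  by (simp add: norm_power norm_mult)

definition fc :: "(real^'n::finite \<Rightarrow> complex) \<Rightarrow> nat \<Rightarrow> complex" where
  "fc \<psi> n = cf (\<lambda>i. - kap n i) \<psi> / complex_of_real ((2*pi) ^ CARD('n))"

lemma rapid_fc:
  fixes \<psi> :: "real^'n::finite \<Rightarrow> complex"
  assumes ts: "torus_smooth \<psi>"
  shows "rapid (fc \<psi>) (kap :: nat \<Rightarrow> ('n \<Rightarrow> int))"
proof (rule rapid_of_decay[OF _ summable_weight])
  fix m
  obtain C where C: "\<And>k. norm (cf k \<psi>) * (1 + nk k) ^ m \<le> C" using cf_decay[OF ts, of m] by blast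
  show "\<exists>C. \<forall>n. norm (fc \<psi> n) * (1 + nk (kap n :: 'n \<Rightarrow> int)) ^ m \<le> C"
  proof (intro exI allI)
    fix n
    have "norm (fc \<psi> n) * (1 + nk (kap n :: 'n \<Rightarrow> int)) ^ m = norm (cf (\<lambda>i. - kap n i) \<psi>) * (1 + nk (\<lambda>i::'n. - kap n i)) ^ m / (2*pi) ^ CARD('n)"
      by (simp add: fc_def norm_divide norm_mult norm_power)
    also have "\<dots> \<le> C / (2*pi) ^ CARD('n)"
      by (rule divide_right_mono[OF C]) simp
    finally show "norm (fc \<psi> n) * (1 + nk (kap n :: 'n \<Rightarrow> int)) ^ m \<le> C / (2*pi) ^ CARD('n)" .
  qed
qed

lemma fourier_inversion:
  fixes \<psi> :: "real^'n::finite \<Rightarrow> complex"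
  assumes ts: "torus_smooth \<psi>"
  shows "\<psi> = ser (fc \<psi>) kap"
proof
  fix x
  have r: "rapid (fc \<psi>) (kap :: nat \<Rightarrow> ('n \<Rightarrow> int))" by (rule rapid_fc[OF ts])
  have sa: "summable (\<lambda>n. norm (fc \<psi> n))" by (rule rapid_summable[OF r])
  define h where "h y = \<psi> y - ser (fc \<psi>) kap y" for y
  have ch: "continuous_on UNIV h" unfolding h_def
    by (intro continuous_intros ts_cont[OF ts] ser_continuous[OF sa])
  have "h x = 0"
  proof (rule completeness[OF ch])
    show "torus_periodic h"
      unfolding torus_periodic_def h_def by (simp add: ts_per[OF ts] ser_periodic)
    fix k :: "'n \<Rightarrow> int"
    have i1: "(\<lambda>x. \<psi> x * ee k x) integrable_on TT"
      by (rule integrable_continuous) (intro continuous_intros ts_cont[OF ts])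
    have i2: "(\<lambda>x. ser (fc \<psi>) kap x * ee k x) integrable_on TT"
      by (rule integrable_continuous) (intro continuous_intros ser_continuous[OF sa])
    have "cf k h = cf k \<psi> - cf k (ser (fc \<psi>) kap)"
      unfolding cf_def h_def using integral_diff[OF i1 i2] by (simp add: algebra_simps)
    also have "cf k (ser (fc \<psi>) kap) = fc \<psi> (inv kap (\<lambda>i. - k i)) * complex_of_real ((2*pi) ^ CARD('n))"
      by (rule cf_ser[OF sa])
    also have "\<dots> = cf k \<psi>"
    proof -
      have "kap (inv kap (\<lambda>i. - k i)) = (\<lambda>i. - k i)" by (rule surj_f_inv_f[OF bij_is_surj[OF bij_kap]])
      then show ?thesis by (simp add: fc_def)
    qed
    finally show "cf k h = 0" by simp
  qed
  then show "\<psi> x = ser (fc \<psi>) kap x" by (simp add: h_def)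
qed


lemma tail_tendsto:
  assumes "summable (w :: nat \<Rightarrow> real)"
  shows "(\<lambda>N. \<Sum>n. if n < N then 0 else w n) \<longlonglongrightarrow> 0"
proof -
  have eq: "(\<Sum>n. if n < N then 0 else w n) = suminf w - (\<Sum>n<N. w n)" for N
  proof -
    have s2: "summable (\<lambda>n. if n < N then w n else 0)"
      by (rule summable_finite[of "{..<N}"]) auto
    have "(\<Sum>n. if n < N then 0 else w n) = (\<Sum>n. w n - (if n < N then w n else 0))"
      by (rule suminf_cong) auto
    also have "\<dots> = suminf w - (\<Sum>n. if n < N then w n else 0)"
      by (rule suminf_diff[OF assms s2, symmetric])
    also have "(\<Sum>n. if n < N then w n else 0) = (\<Sum>n<N. w n)"
      by (subst suminf_finite[of "{..<N}"]) auto
    finally show ?thesis .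
  qed
  have "(\<lambda>N. suminf w - (\<Sum>n<N. w n)) \<longlonglongrightarrow> suminf w - suminf w"
    by (intro tendsto_intros summable_LIMSEQ[OF assms])
  then show ?thesis unfolding eq by simp
qed

lemma ts_ser_finite:
  assumes "rapid a k"
  shows "torus_smooth (\<lambda>x. \<Sum>n<N. a n * ee (k n) x)"
proof -
  have "(\<lambda>x. \<Sum>n<N. a n * ee (k n) x) = ser (\<lambda>n. if n < N then a n else 0) k"
    by (rule ext) (simp add: ser_finite)
  then show ?thesis using torus_smooth_ser[OF rapid_trunc[OF assms]] by simp
qed

lemma dist_expansion:
  fixes u :: "(real^'n::finite \<Rightarrow> complex) \<Rightarrow> complex"
  assumes td: "torus_distribution u" and r: "rapid a k"
  shows "(\<lambda>n. a n * u (ee (k n))) sums u (ser a k)"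
proof -
  have lin: "\<And>a b \<phi> \<psi>. torus_smooth \<phi> \<Longrightarrow> torus_smooth \<psi> \<Longrightarrow>
        u (\<lambda>x. a * \<phi> x + b * \<psi> x) = a * u \<phi> + b * u \<psi>"
    using td unfolding torus_distribution_def by blast
  obtain C M where CM: "\<And>\<phi>. torus_smooth \<phi> \<Longrightarrow>
        norm (u \<phi>) \<le> C * (\<Sum>js\<in>{js::'n list. length js \<le> M}. SUP x. norm (dpar js \<phi> x))"
    using td unfolding torus_distribution_def by blast
  define P where "P N = (\<lambda>x. \<Sum>n<N. a n * ee (k n) x)" for N
  have tsP: "torus_smooth (P N)" for N unfolding P_def by (rule ts_ser_finite[OF r])
  have uP: "u (P N) = (\<Sum>n<N. a n * u (ee (k n)))" for N
  proof (induction N)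
    case 0
    have "u (\<lambda>x. 0 * ee (\<lambda>i. 0) x + 0 * ee (\<lambda>i. 0) x) = 0 * u (ee (\<lambda>i. 0)) + 0 * u (ee (\<lambda>i. 0))"
      by (rule lin[OF torus_smooth_ee torus_smooth_ee])
    then show ?case by (simp add: P_def)
  next
    case (Suc N)
    have "P (Suc N) = (\<lambda>x. 1 * P N x + a N * ee (k N) x)" by (simp add: P_def)
    moreover have "u (\<lambda>x. 1 * P N x + a N * ee (k N) x) = 1 * u (P N) + a N * u (ee (k N))"
      by (rule lin[OF tsP torus_smooth_ee])
    ultimately have "u (P (Suc N)) = 1 * u (P N) + a N * u (ee (k N))" by simp
    then show ?case using Suc by simp
  qed
  define t where "t N n = (if n < N then 0 else a n)" for N n
  have rt: "rapid (t N) k" for N unfolding t_def by (rule rapid_tail[OF r])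
  have split: "ser a k x = P N x + ser (t N) k x" for N x
  proof -
    have s1: "summable (\<lambda>n. (if n < N then a n else 0) * ee (k n) x)"
      by (rule ser_summable[OF rapid_summable[OF rapid_trunc[OF r]]])
    have s2: "summable (\<lambda>n. t N n * ee (k n) x)"
      by (rule ser_summable[OF rapid_summable[OF rt]])
    have "ser a k x = (\<Sum>n. (if n < N then a n else 0) * ee (k n) x + t N n * ee (k n) x)"
      unfolding ser_def by (rule suminf_cong) (simp add: t_def)
    also have "\<dots> = ser (\<lambda>n. if n < N then a n else 0) k x + ser (t N) k x"
      unfolding ser_def by (rule suminf_add[OF s1 s2, symmetric])
    finally show ?thesis by (simp add: ser_finite P_def)
  qed
  have tsS: "torus_smooth (ser a k)" by (rule torus_smooth_ser[OF r])
  define J where "J = {js::'n list. length js \<le> M}"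
  have finJ: "finite J" unfolding J_def using finite_lists_length_le[of "UNIV::'n set" M] by simp
  define T where "T N = (\<Sum>n. norm (t N n) * (1 + nk (k n)) ^ M)" for N
  have diff: "u (ser a k) - u (P N) = u (ser (t N) k)" for N
  proof -
    have "u (\<lambda>x. 1 * ser a k x + (-1) * P N x) = 1 * u (ser a k) + (-1) * u (P N)"
      by (rule lin[OF tsS tsP])
    moreover have "(\<lambda>x. 1 * ser a k x + (-1) * P N x) = ser (t N) k"
      by (rule ext) (simp add: split[of _ N])
    ultimately show ?thesis by simp
  qed
  have bound: "norm (u (ser a k) - u (P N)) \<le> \<bar>C\<bar> * (real (card J) * T N)" for N
  proof -
    have sup: "(SUP x. norm (dpar js (ser (t N) k) x)) \<le> T N \<and> 0 \<le> (SUP x. norm (dpar js (ser (t N) k) x))"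
      if js: "js \<in> J" for js
    proof -
      have pt: "norm (dpar js (ser (t N) k) x) \<le> T N" for x
      proof -
        have sm1: "summable (\<lambda>n. norm (t N n) * (1 + nk (k n)) ^ length js)"
          using rt unfolding rapid_def by blast
        have sm2: "summable (\<lambda>n. norm (t N n) * (1 + nk (k n)) ^ M)"
          using rt unfolding rapid_def by blast
        have "norm (dpar js (ser (t N) k) x) \<le> (\<Sum>n. norm (t N n) * (1 + nk (k n)) ^ length js)"
          by (rule dpar_ser_bound[OF rt])
        also have "\<dots> \<le> T N" unfolding T_def
        proof (rule suminf_le[OF _ sm1 sm2])
          fix n
          have "(1 + nk (k n)) ^ length js \<le> (1 + nk (k n)) ^ M"
            using js nk_nonneg[of "k n"] by (intro power_increasing) (auto simp: J_def)
          then show "norm (t N n) * (1 + nk (k n)) ^ length js \<le> norm (t N n) * (1 + nk (k n)) ^ M"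
            by (rule mult_left_mono) simp
        qed
        finally show ?thesis .
      qed
      have bdd: "bdd_above (range (\<lambda>x. norm (dpar js (ser (t N) k) x)))"
        using pt by (intro bdd_aboveI2) blast
      show ?thesis
      proof
        show "(SUP x. norm (dpar js (ser (t N) k) x)) \<le> T N" by (rule cSUP_least) (use pt in auto)
        show "0 \<le> (SUP x. norm (dpar js (ser (t N) k) x))"
          by (rule order_trans[OF norm_ge_zero cSUP_upper[OF UNIV_I bdd]])
      qed
    qed
    define S where "S = (\<Sum>js\<in>J. SUP x. norm (dpar js (ser (t N) k) x))"
    have S0: "0 \<le> S" unfolding S_def using sup by (intro sum_nonneg) blast
    have S1: "S \<le> real (card J) * T N"
      unfolding S_def using sum_bounded_above[of J "\<lambda>js. SUP x. norm (dpar js (ser (t N) k) x)" "T N"] sup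
      by blast
    have "norm (u (ser a k) - u (P N)) = norm (u (ser (t N) k))" by (simp add: diff)
    also have "\<dots> \<le> C * S" unfolding S_def J_def by (rule CM[OF torus_smooth_ser[OF rt]])
    also have "\<dots> \<le> \<bar>C\<bar> * S" using S0 by (intro mult_right_mono) auto
    also have "\<dots> \<le> \<bar>C\<bar> * (real (card J) * T N)" using S1 by (intro mult_left_mono) auto
    finally show ?thesis .
  qed
  have T0: "T \<longlonglongrightarrow> 0"
  proof -
    have sw: "summable (\<lambda>n. norm (a n) * (1 + nk (k n)) ^ M)" using r unfolding rapid_def by blast
    have "T = (\<lambda>N. \<Sum>n. if n < N then 0 else norm (a n) * (1 + nk (k n)) ^ M)"
      unfolding T_def t_def by (rule ext, rule suminf_cong) auto
    then show ?thesis using tail_tendsto[OF sw] by simp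
  qed
  have "(\<lambda>N. u (P N) - u (ser a k)) \<longlonglongrightarrow> 0"
  proof (rule tendsto_0_le[OF T0, where K = "\<bar>C\<bar> * real (card J)"])
    show "\<forall>\<^sub>F N in sequentially. norm (u (P N) - u (ser a k)) \<le> norm (T N) * (\<bar>C\<bar> * real (card J))"
    proof (intro always_eventually allI)
      fix N
      have tn: "T N \<ge> 0" unfolding T_def
      proof (intro suminf_nonneg)
        show "summable (\<lambda>n. norm (t N n) * (1 + nk (k n)) ^ M)" using rt unfolding rapid_def by blast
        fix n show "0 \<le> norm (t N n) * (1 + nk (k n)) ^ M"
          using nk_nonneg[of "k n"] by simp
      qed
      have "norm (u (P N) - u (ser a k)) = norm (u (ser a k) - u (P N))" by (simp add: norm_minus_commute)
      also have "\<dots> \<le> \<bar>C\<bar> * (real (card J) * T N)" by (rule bound)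
      finally show "norm (u (P N) - u (ser a k)) \<le> norm (T N) * (\<bar>C\<bar> * real (card J))"
        using tn by (simp add: algebra_simps)
    qed
  qed
  then have "(\<lambda>N. u (P N)) \<longlonglongrightarrow> u (ser a k)" by (simp add: LIM_zero_iff)
  then show ?thesis unfolding sums_def uP .
qed


lemma nonliou:
  fixes \<rho> :: real
  assumes irr: "\<rho> \<notin> \<rat>" and nl: "\<not> liouville \<rho>"
  shows "\<exists>\<delta> N. \<delta> > 0 \<and> \<delta> \<le> 1 \<and> (\<forall>(p::int) (q::nat). q > 0 \<longrightarrow> \<bar>\<rho> - of_int p / of_nat q\<bar> \<ge> \<delta> / real q ^ N)"
proof -
  obtain M :: real where M: "M > 0"
    and fin: "finite {(p, q) | (p::int) (q::nat). q > 0 \<and> \<bar>\<rho> - of_int p / of_nat q\<bar> < real q powr (- M)}"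
    using nl irr unfolding liouville_def by blast
  define F where "F = {(p, q) | (p::int) (q::nat). q > 0 \<and> \<bar>\<rho> - of_int p / of_nat q\<bar> < real q powr (- M)}"
  define N where "N = nat \<lceil>M\<rceil>"
  define \<delta> where "\<delta> = Min (insert 1 ((\<lambda>(p, q). \<bar>\<rho> - of_int p / of_nat q\<bar>) ` F))"
  have finF: "finite F" using fin unfolding F_def .
  have pos: "\<bar>\<rho> - of_int p / of_nat q\<bar> > 0" for p :: int and q :: nat
  proof -
    have "of_int p / of_nat q \<in> \<rat>" by (intro Rats_divide Rats_of_int Rats_of_nat)
    then have "\<rho> \<noteq> of_int p / of_nat q" using irr by auto
    then show ?thesis by simp
  qed
  have d0: "\<delta> > 0" unfolding \<delta>_def using finF pos by (subst Min_gr_iff) auto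
  have d1: "\<delta> \<le> 1" unfolding \<delta>_def using finF by (intro Min_le) auto
  have "\<bar>\<rho> - of_int p / of_nat q\<bar> \<ge> \<delta> / real q ^ N" if q: "q > 0" for p :: int and q :: nat
  proof -
    have q1: "real q \<ge> 1" using q by simp
    have qN: "real q ^ N \<ge> 1" using q1 by (rule one_le_power)
    have dq: "\<delta> / real q ^ N \<le> \<delta>" using qN d0 by (simp add: divide_le_eq)
    show ?thesis
    proof (cases "(p, q) \<in> F")
      case True
      have "\<delta> \<le> \<bar>\<rho> - of_int p / of_nat q\<bar>" unfolding \<delta>_def
        using finF True by (intro Min_le) auto
      then show ?thesis using dq by linarith
    next
      case False
      then have ge: "\<bar>\<rho> - of_int p / of_nat q\<bar> \<ge> real q powr (- M)" using q unfolding F_def by auto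
      have "real q powr (- real N) \<le> real q powr (- M)"
        using q1 by (intro powr_mono) (auto simp: N_def of_nat_nat le_of_int_ceiling intro: order_trans[OF le_of_int_ceiling])
      also have "real q powr (- real N) = 1 / real q ^ N"
        using q by (simp add: powr_minus powr_realpow divide_inverse)
      finally have "1 / real q ^ N \<le> \<bar>\<rho> - of_int p / of_nat q\<bar>" using ge by linarith
      moreover have "\<delta> / real q ^ N \<le> 1 / real q ^ N"
        using d1 qN by (intro divide_right_mono) auto
      ultimately show ?thesis by linarith
    qed
  qed
  then show ?thesis using d0 d1 by blast
qed

lemma sum_UNIV_3: "sum f (UNIV::3 set) = f 0 + f 1 + f 2"
proof -
  have "sum f (UNIV::3 set) = f 1 + f 2 + f 3" by (rule sum_3)
  moreover have "(3::3) = 0" by simp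
  ultimately show ?thesis by (simp add: ac_simps)
qed

definition qq :: "complex \<Rightarrow> complex \<Rightarrow> real \<Rightarrow> (3 \<Rightarrow> int) \<Rightarrow> complex" where
  "qq \<alpha>1 \<alpha>2 l k = - complex_of_real l - (of_int (k 0) + \<alpha>1 * of_int (k 1) + \<alpha>2 * of_int (k 2))"

lemma Dop_ee: "Dop j (ee k) x = of_int (k j) * ee k x"
  by (simp add: Dop_def pd_ee algebra_simps)

lemma cc_op_ee:
  "cc_op (\<lambda>j. - coeffs2 \<alpha>1 \<alpha>2 j) (- complex_of_real l) (ee k) =
     (\<lambda>x. qq \<alpha>1 \<alpha>2 l k * ee k x + 0 * ee k x)"
proof
  fix x :: "real^3"
  have "cc_op (\<lambda>j. - coeffs2 \<alpha>1 \<alpha>2 j) (- complex_of_real l) (ee k) x =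
        (\<Sum>j\<in>UNIV. - coeffs2 \<alpha>1 \<alpha>2 j * (of_int (k j) * ee k x)) - complex_of_real l * ee k x"
    by (simp add: cc_op_def Dop_ee)
  also have "\<dots> = qq \<alpha>1 \<alpha>2 l k * ee k x"
    by (simp add: sum_UNIV_3 coeffs2_def qq_def algebra_simps)
  finally show "cc_op (\<lambda>j. - coeffs2 \<alpha>1 \<alpha>2 j) (- complex_of_real l) (ee k) x = qq \<alpha>1 \<alpha>2 l k * ee k x + 0 * ee k x"
    by simp
qed

lemma exhaust_3': "(i::3) = 0 \<or> i = 1 \<or> i = 2"
  using exhaust_3[of i] by auto

lemma dioph:
  assumes a: "Im \<alpha>1 \<noteq> 0" and b: "Im \<alpha>2 \<noteq> 0"
    and irr: "Im \<alpha>1 / Im \<alpha>2 \<notin> \<rat>" and nl: "\<not> liouville (Im \<alpha>1 / Im \<alpha>2)"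
  shows "\<exists>R \<delta> N. \<delta> > 0 \<and> (\<forall>k::3\<Rightarrow>int. (\<exists>i. \<bar>k i\<bar> > R) \<longrightarrow> norm (qq \<alpha>1 \<alpha>2 l k) \<ge> \<delta> / (1 + nk k) ^ N)"
proof -
  define A where "A = Im \<alpha>1"
  define B where "B = Im \<alpha>2"
  define \<rho> where "\<rho> = A / B"
  obtain \<delta> N where d: "\<delta> > 0" "\<delta> \<le> 1"
    and H: "\<And>(p::int) (q::nat). q > 0 \<Longrightarrow> \<bar>\<rho> - of_int p / of_nat q\<bar> \<ge> \<delta> / real q ^ N"
    using nonliou[OF irr nl] unfolding \<rho>_def A_def B_def by blast
  have B0: "B \<noteq> 0" using b by (simp add: B_def)
  define R :: int where "R = \<lceil>\<bar>l\<bar>\<rceil> + 1"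
  define \<delta>f where "\<delta>f = min 1 (\<bar>B\<bar> * \<delta>)"
  have df: "\<delta>f > 0" "\<delta>f \<le> 1" "\<delta>f \<le> \<bar>B\<bar> * \<delta>" using d B0 by (auto simp: \<delta>f_def)
  have main: "norm (qq \<alpha>1 \<alpha>2 l k) \<ge> \<delta>f / (1 + nk k) ^ N" if ki: "\<bar>k i\<bar> > R" for k :: "3 \<Rightarrow> int" and i
  proof -
    define P where "P = (1 + nk k) ^ N"
    have P1: "P \<ge> 1" unfolding P_def using nk_nonneg[of k] by (intro one_le_power) simp
    have dfP: "\<delta>f / (1 + nk k) ^ N \<le> \<delta>f" using P1 df unfolding P_def by (simp add: divide_le_eq)
    have nq: "norm (qq \<alpha>1 \<alpha>2 l k) \<ge> \<bar>A * of_int (k 1) + B * of_int (k 2)\<bar>"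
    proof -
      have "Im (qq \<alpha>1 \<alpha>2 l k) = - (A * of_int (k 1) + B * of_int (k 2))"
        by (simp add: qq_def A_def B_def)
      then show ?thesis using abs_Im_le_cmod[of "qq \<alpha>1 \<alpha>2 l k"] by simp
    qed
    show ?thesis
    proof (cases "k 1 = 0")
      case False
      define q where "q = nat \<bar>k 1\<bar>"
      define p where "p = (if k 1 > 0 then - k 2 else k 2)"
      have q0: "q > 0" using False by (simp add: q_def)
      have rq: "real q = \<bar>real_of_int (k 1)\<bar>" using False by (simp add: q_def)
      have pq: "of_int p / of_nat q = - (real_of_int (k 2) / real_of_int (k 1))"
        using False by (auto simp: p_def rq)
      have k1: "real_of_int (k 1) \<noteq> 0" using False by simp
      have key: "\<bar>A * of_int (k 1) + B * of_int (k 2)\<bar> = \<bar>B\<bar> * real q * \<bar>\<rho> - of_int p / of_nat q\<bar>"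
      proof -
        have "A * of_int (k 1) + B * of_int (k 2) = B * of_int (k 1) * (\<rho> - of_int p / of_nat q)"
          unfolding pq \<rho>_def using B0 k1 by (simp add: field_simps)
        then show ?thesis by (simp add: abs_mult rq)
      qed
      have "\<bar>\<rho> - of_int p / of_nat q\<bar> \<ge> \<delta> / real q ^ N" by (rule H[OF q0])
      then have "\<bar>A * of_int (k 1) + B * of_int (k 2)\<bar> \<ge> \<bar>B\<bar> * real q * (\<delta> / real q ^ N)"
        unfolding key by (intro mult_left_mono) auto
      moreover have "\<bar>B\<bar> * real q * (\<delta> / real q ^ N) \<ge> \<bar>B\<bar> * \<delta> / real q ^ N"
      proof -
        have "real q \<ge> 1" using q0 by simp
        then have "\<bar>B\<bar> * \<delta> / real q ^ N * 1 \<le> \<bar>B\<bar> * \<delta> / real q ^ N * real q"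
          using d by (intro mult_left_mono) auto
        then show ?thesis by (simp add: algebra_simps)
      qed
      moreover have "\<bar>B\<bar> * \<delta> / real q ^ N \<ge> \<delta>f / (1 + nk k) ^ N"
      proof -
        have "real q \<le> 1 + nk k" using nk_ge[of k 1] rq by simp
        then have "real q ^ N \<le> (1 + nk k) ^ N" using q0 by (intro power_mono) auto
        moreover have "real q ^ N > 0" using q0 by simp
        ultimately have "\<bar>B\<bar> * \<delta> / (1 + nk k) ^ N \<le> \<bar>B\<bar> * \<delta> / real q ^ N"
          using d B0 nk_nonneg[of k] by (intro divide_left_mono) (auto intro!: mult_pos_pos)
        moreover have "\<delta>f / (1 + nk k) ^ N \<le> \<bar>B\<bar> * \<delta> / (1 + nk k) ^ N"
          using df nk_nonneg[of k] by (intro divide_right_mono) auto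
        ultimately show ?thesis by linarith
      qed
      ultimately have "norm (qq \<alpha>1 \<alpha>2 l k) \<ge> \<delta>f / (1 + nk k) ^ N" using nq by linarith
      then show ?thesis .
    next
      case k1: True
      show ?thesis
      proof (cases "k 2 = 0")
        case False
        have "\<bar>A * of_int (k 1) + B * of_int (k 2)\<bar> = \<bar>B\<bar> * \<bar>real_of_int (k 2)\<bar>"
          using k1 by (simp add: abs_mult)
        also have "\<dots> \<ge> \<bar>B\<bar>"
        proof -
          have "\<bar>real_of_int (k 2)\<bar> \<ge> 1" using False by linarith
          then show ?thesis by (simp add: mult_le_cancel_left1)
        qed
        finally have "norm (qq \<alpha>1 \<alpha>2 l k) \<ge> \<bar>B\<bar>" using nq by linarith
        moreover have "\<bar>B\<bar> \<ge> \<bar>B\<bar> * \<delta>" using d mult_left_mono[of \<delta> 1 "\<bar>B\<bar>"] by simp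
        ultimately show ?thesis using df dfP P_def by linarith
      next
        case k2: True
        have R0: "R \<ge> 0" proof -
          have "real_of_int \<lceil>\<bar>l\<bar>\<rceil> \<ge> \<bar>l\<bar>" by (rule le_of_int_ceiling)
          then have "\<lceil>\<bar>l\<bar>\<rceil> \<ge> 0" by linarith
          then show ?thesis unfolding R_def by simp
        qed
        have "i \<noteq> 1" "i \<noteq> 2" using ki k1 k2 R0 by auto
        then have i0: "i = 0" using exhaust_3'[of i] by auto
        have "qq \<alpha>1 \<alpha>2 l k = complex_of_real (- (l + of_int (k 0)))"
          using k1 k2 by (simp add: qq_def)
        then have "norm (qq \<alpha>1 \<alpha>2 l k) = \<bar>l + of_int (k 0)\<bar>" by (simp only: norm_of_real abs_minus_cancel)
        moreover have "\<bar>l + of_int (k 0)\<bar> \<ge> 1"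
        proof -
          have "\<bar>k 0\<bar> \<ge> R + 1" using ki i0 by simp
          then have "real_of_int \<bar>k 0\<bar> \<ge> real_of_int R + 1" by linarith
          moreover have "real_of_int R \<ge> \<bar>l\<bar> + 1" unfolding R_def by linarith
          ultimately show ?thesis by linarith
        qed
        ultimately show ?thesis using df dfP P_def by linarith
      qed
    qed
  qed
  show ?thesis using df main by blast
qed


lemma dist_of_TT: "dist_of f \<phi> = integral TT (\<lambda>x. f x * \<phi> x)"
  by (simp add: dist_of_def tb_def)

lemma gh:
  assumes d0: "\<delta> > 0"
    and dio: "\<And>k::3\<Rightarrow>int. (\<exists>i. \<bar>k i\<bar> > R) \<Longrightarrow> norm (qq \<alpha>1 \<alpha>2 l k) \<ge> \<delta> / (1 + nk k) ^ N"
  shows "globally_hypoelliptic (coeffs2 \<alpha>1 \<alpha>2) (- complex_of_real l)"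
  unfolding globally_hypoelliptic_def
proof (intro allI impI)
  fix u :: "(real^3 \<Rightarrow> complex) \<Rightarrow> complex"
  assume td: "torus_distribution u"
    and sd: "smooth_dist (cc_op_dist (coeffs2 \<alpha>1 \<alpha>2) (- complex_of_real l) u)"
  have lin: "\<And>a b \<phi> \<psi>. torus_smooth \<phi> \<Longrightarrow> torus_smooth \<psi> \<Longrightarrow>
        u (\<lambda>x. a * \<phi> x + b * \<psi> x) = a * u \<phi> + b * u \<psi>"
    using td unfolding torus_distribution_def by blast
  obtain f where tsf: "torus_smooth f"
    and hf: "\<And>\<phi>. torus_smooth \<phi> \<Longrightarrow> u (cc_op (\<lambda>j. - coeffs2 \<alpha>1 \<alpha>2 j) (- complex_of_real l) \<phi>) = dist_of f \<phi>"
    using sd unfolding smooth_dist_def cc_op_dist_def by blast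
  have eqk: "qq \<alpha>1 \<alpha>2 l k * u (ee k) = cf k f" for k
  proof -
    have "u (\<lambda>x. qq \<alpha>1 \<alpha>2 l k * ee k x + 0 * ee k x) = qq \<alpha>1 \<alpha>2 l k * u (ee k) + 0 * u (ee k)"
      by (rule lin[OF torus_smooth_ee torus_smooth_ee])
    then have "qq \<alpha>1 \<alpha>2 l k * u (ee k) = u (cc_op (\<lambda>j. - coeffs2 \<alpha>1 \<alpha>2 j) (- complex_of_real l) (ee k))"
      by (simp add: cc_op_ee)
    also have "\<dots> = dist_of f (ee k)" by (rule hf[OF torus_smooth_ee])
    also have "\<dots> = cf k f" by (simp add: dist_of_TT cf_def)
    finally show ?thesis .
  qed
  have decay: "\<exists>C. \<forall>k::3\<Rightarrow>int. norm (u (ee k)) * (1 + nk k) ^ m \<le> C" for m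
  proof -
    obtain Cf where Cf: "\<And>k. norm (cf k f) * (1 + nk k) ^ (m + N) \<le> Cf"
      using cf_decay[OF tsf, of "m + N"] by blast
    have Cf0: "Cf \<ge> 0" using Cf[of "\<lambda>i. 0"] by (smt (verit) mult_nonneg_nonneg norm_ge_zero zero_le_power nk_nonneg)
    define E where "E = PiE (UNIV::3 set) (\<lambda>_. {-R..R})"
    have finE: "finite E" unfolding E_def by (intro finite_PiE) auto
    define C where "C = Cf / \<delta> + (\<Sum>k\<in>E. norm (u (ee k)) * (1 + nk k) ^ m)"
    have Es: "(\<Sum>k\<in>E. norm (u (ee k)) * (1 + nk k) ^ m) \<ge> 0"
      by (intro sum_nonneg) (simp add: nk_nonneg)
    show ?thesis
    proof (intro exI allI)
      fix k :: "3 \<Rightarrow> int"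
      show "norm (u (ee k)) * (1 + nk k) ^ m \<le> C"
      proof (cases "k \<in> E")
        case True
        have "norm (u (ee k)) * (1 + nk k) ^ m \<le> (\<Sum>k\<in>E. norm (u (ee k)) * (1 + nk k) ^ m)"
          by (rule member_le_sum[OF True _ finE]) (simp add: nk_nonneg)
        also have "\<dots> \<le> C" using Cf0 d0 by (simp add: C_def)
        finally show ?thesis .
      next
        case False
        have "\<exists>i. \<bar>k i\<bar> > R"
        proof (rule ccontr)
          assume "\<not> (\<exists>i. \<bar>k i\<bar> > R)"
          then have "\<forall>i. k i \<in> {-R..R}" by (auto simp: abs_le_iff) (smt (verit))+
          then have "k \<in> E" unfolding E_def by (auto simp: PiE_def extensional_def)
          then show False using False by simp
        qed
        then have q: "norm (qq \<alpha>1 \<alpha>2 l k) \<ge> \<delta> / (1 + nk k) ^ N" by (rule dio)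
        have P: "(1 + nk k) ^ N > 0" using nk_nonneg[of k] by simp
        have qpos: "norm (qq \<alpha>1 \<alpha>2 l k) > 0" using q d0 P by (smt (verit) divide_pos_pos)
        have "norm (u (ee k)) = norm (cf k f) / norm (qq \<alpha>1 \<alpha>2 l k)"
        proof -
          have nm: "norm (cf k f) = norm (qq \<alpha>1 \<alpha>2 l k) * norm (u (ee k))"
            using eqk[of k] norm_mult by metis
          show ?thesis unfolding nm using qpos by simp
        qed
        also have "\<dots> \<le> norm (cf k f) / (\<delta> / (1 + nk k) ^ N)"
          using q d0 P qpos by (intro divide_left_mono) auto
        also have "\<dots> = norm (cf k f) * (1 + nk k) ^ N / \<delta>" by simp
        finally have "norm (u (ee k)) * (1 + nk k) ^ m \<le> norm (cf k f) * (1 + nk k) ^ N / \<delta> * (1 + nk k) ^ m"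
          using nk_nonneg[of k] by (intro mult_right_mono) auto
        also have "\<dots> = norm (cf k f) * (1 + nk k) ^ (m + N) / \<delta>" by (simp add: power_add algebra_simps)
        also have "\<dots> \<le> Cf / \<delta>" using Cf[of k] d0 by (intro divide_right_mono) auto
        also have "\<dots> \<le> C" using Es by (simp add: C_def)
        finally show ?thesis .
      qed
    qed
  qed
  define V :: complex where "V = complex_of_real ((2*pi) ^ CARD(3))"
  have V0: "V \<noteq> 0" by (simp add: V_def)
  define b where "b n = u (ee (kap n :: 3 \<Rightarrow> int)) / V" for n
  define kk :: "nat \<Rightarrow> 3 \<Rightarrow> int" where "kk n = (\<lambda>i. - kap n i)" for n
  have nkk: "nk (kk n) = nk (kap n :: 3 \<Rightarrow> int)" for n by (simp add: kk_def)
  have rb: "rapid b kk"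
  proof (rule rapid_of_decay)
    fix m
    obtain C where C: "\<And>k::3\<Rightarrow>int. norm (u (ee k)) * (1 + nk k) ^ m \<le> C" using decay[of m] by blast
    show "\<exists>C. \<forall>n. norm (b n) * (1 + nk (kk n)) ^ m \<le> C"
    proof (intro exI allI)
      fix n
      have "norm (b n) * (1 + nk (kk n)) ^ m = norm (u (ee (kap n :: 3 \<Rightarrow> int))) * (1 + nk (kap n :: 3 \<Rightarrow> int)) ^ m / norm V"
        by (simp add: b_def nkk norm_divide)
      also have "\<dots> \<le> C / norm V" by (rule divide_right_mono[OF C]) simp
      finally show "norm (b n) * (1 + nk (kk n)) ^ m \<le> C / norm V" .
    qed
  next
    show "summable (\<lambda>n. 1 / (1 + nk (kk n)) ^ (2 * CARD(3)))"
      unfolding nkk by (rule summable_weight)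
  qed
  define g where "g = ser b kk"
  show "smooth_dist u"
    unfolding smooth_dist_def
  proof (intro exI conjI allI impI)
    show "torus_smooth g" unfolding g_def by (rule torus_smooth_ser[OF rb])
    fix \<phi> :: "real^3 \<Rightarrow> complex"
    assume ts: "torus_smooth \<phi>"
    have s1: "(\<lambda>n. fc \<phi> n * u (ee (kap n))) sums u (ser (fc \<phi>) kap)"
      by (rule dist_expansion[OF td rapid_fc[OF ts]])
    have u1: "u \<phi> = u (ser (fc \<phi>) kap)" using fourier_inversion[OF ts] by simp
    have s2: "(\<lambda>n. b n * integral TT (\<lambda>x. ee (kk n) x * \<phi> x)) sums integral TT (\<lambda>x. ser b kk x * \<phi> x)"
      by (rule ser_integral[OF rapid_summable[OF rb] ts_cont[OF ts]])
    have eqn: "b n * integral TT (\<lambda>x. ee (kk n) x * \<phi> x) = fc \<phi> n * u (ee (kap n))" for n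
    proof -
      have "integral TT (\<lambda>x. ee (kk n) x * \<phi> x) = cf (kk n) \<phi>"
        unfolding cf_def by (simp add: mult.commute)
      then show ?thesis by (simp add: b_def fc_def kk_def V_def)
    qed
    have "dist_of g \<phi> = integral TT (\<lambda>x. ser b kk x * \<phi> x)" by (simp add: dist_of_TT g_def)
    also have "\<dots> = (\<Sum>n. fc \<phi> n * u (ee (kap n)))" using s2 unfolding eqn by (simp add: sums_iff)
    also have "\<dots> = u \<phi>" using s1 u1 by (simp add: sums_iff)
    finally show "u \<phi> = dist_of g \<phi>" by simp
  qed
qed

theorem mainTheorem10:
  fixes \<alpha>1 \<alpha>2 :: complex
  assumes "\<alpha>1 \<notin> \<real>" and "\<alpha>2 \<notin> \<real>"
    and "Im \<alpha>1 / Im \<alpha>2 \<notin> \<rat>"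
    and "\<not> liouville (Im \<alpha>1 / Im \<alpha>2)"
  shows "N2 \<alpha>1 \<alpha>2 = {}"
proof -
  have a: "Im \<alpha>1 \<noteq> 0" using assms(1) by (simp add: complex_is_Real_iff)
  have b: "Im \<alpha>2 \<noteq> 0" using assms(2) by (simp add: complex_is_Real_iff)
  have "globally_hypoelliptic (coeffs2 \<alpha>1 \<alpha>2) (- complex_of_real l)" for l
  proof -
    obtain R \<delta> N where "\<delta> > 0"
      and "\<forall>k::3\<Rightarrow>int. (\<exists>i. \<bar>k i\<bar> > R) \<longrightarrow> norm (qq \<alpha>1 \<alpha>2 l k) \<ge> \<delta> / (1 + nk k) ^ N"
      using dioph[OF a b assms(3) assms(4), of l] by blast
    then show ?thesis by (intro gh) auto
  qed
  then show ?thesis unfolding N2_def by simp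
qed


end
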